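(* Let $W_n$ be the irreducible Coxeter group of type $\mathrm{A}_n$, $\mathrm{B}_n$ or $\mathrm{D}_n$ (each of the three families considered separately). Then the fourth centred moment $\mathbb{E}\big((T_{W_n}-\mathbb{E}(T_{W_n}))^4\big)$ is of order $n^2$, i.e. there are constants $0<c\le C$ such that $c n^2\le \mathbb{E}\big((T_{W_n}-\mathbb{E}(T_{W_n}))^4\big)\le Cn^2$ for all sufficiently large $n$.
   Context: For a finite Coxeter system $(W,S)$, $\operatorname{des}(w)=|\{s\in S: l_S(ws)<l_S(w)\}|$ where $l_S$ is word length, $t(w)=\operatorname{des}(w)+\operatorname{des}(w^{-1})$, and $T_W$ is the random variable $t(w)$ for $w$ uniform in $W$. $\mathrm{A}_n\cong \operatorname{Sym}(n+1)$, $\mathrm{B}_n$ is the hyperoctahedral group of signed permutations of rank $n$, $\mathrm{D}_n$ its index-two subgroup of signed permutations with an even number of negative entries, each with its standard Coxeter generators. *)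

theory Defs
  imports Complex_Main
begin

text \<open>Elements of the Coxeter groups are realised concretely as bijections of int
  (permutations of {1..n+1} for type A; signed permutations of {-n..-1,1..n}
  fixing everything else for types B and D). The group product w s is the
  composition w o s.\<close>

datatype cox_family = TypeA | TypeB | TypeD

definition transp :: "int \<Rightarrow> int \<Rightarrow> int \<Rightarrow> int" where
  "transp a b = (\<lambda>x. if x = a then b else if x = b then a else x)"

definition signed_perms :: "nat \<Rightarrow> (int \<Rightarrow> int) set" where
  "signed_perms n = {w. bij w \<and> (\<forall>x. w (- x) = - w x)
       \<and> (\<forall>x. x \<notin> {- int n..int n} \<longrightarrow> w x = x)}"

definition coxW :: "cox_family \<Rightarrow> nat \<Rightarrow> (int \<Rightarrow> int) set" where
  "coxW F n = (case F of
      TypeA \<Rightarrow> {w. bij_betw w {1..int n + 1} {1..int n + 1}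
                 \<and> (\<forall>x. x \<notin> {1..int n + 1} \<longrightarrow> w x = x)}
    | TypeB \<Rightarrow> signed_perms n
    | TypeD \<Rightarrow> {w \<in> signed_perms n. even (card {i \<in> {1..int n}. w i < 0})})"

definition coxS :: "cox_family \<Rightarrow> nat \<Rightarrow> (int \<Rightarrow> int) set" where
  "coxS F n = (case F of
      TypeA \<Rightarrow> {transp i (i + 1) | i. 1 \<le> i \<and> i \<le> int n}
    | TypeB \<Rightarrow> {transp 1 (-1)} \<union>
               {transp i (i + 1) \<circ> transp (-i) (-(i + 1)) | i. 1 \<le> i \<and> i \<le> int n - 1}
    | TypeD \<Rightarrow> {transp 1 (-2) \<circ> transp (-1) 2} \<union>
               {transp i (i + 1) \<circ> transp (-i) (-(i + 1)) | i. 1 \<le> i \<and> i \<le> int n - 1})"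

definition word_length :: "('a \<Rightarrow> 'a) set \<Rightarrow> ('a \<Rightarrow> 'a) \<Rightarrow> nat" where
  "word_length S w = (LEAST k. \<exists>ws. set ws \<subseteq> S \<and> length ws = k \<and> foldr (\<circ>) ws id = w)"

definition des :: "('a \<Rightarrow> 'a) set \<Rightarrow> ('a \<Rightarrow> 'a) \<Rightarrow> nat" where
  "des S w = card {s \<in> S. word_length S (w \<circ> s) < word_length S w}"

definition tstat :: "('a \<Rightarrow> 'a) set \<Rightarrow> ('a \<Rightarrow> 'a) \<Rightarrow> nat" where
  "tstat S w = des S w + des S (inv w)"

definition T_mean :: "cox_family \<Rightarrow> nat \<Rightarrow> real" where
  "T_mean F n = (\<Sum>w\<in>coxW F n. real (tstat (coxS F n) w)) / real (card (coxW F n))"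

definition T_moment4 :: "cox_family \<Rightarrow> nat \<Rightarrow> real" where
  "T_moment4 F n = (\<Sum>w\<in>coxW F n. (real (tstat (coxS F n) w) - T_mean F n) ^ 4)
                     / real (card (coxW F n))"

end

theory Submission
  imports Defs "HOL-Analysis.Convex"
begin
definition gen :: "('a \<Rightarrow> 'a) set \<Rightarrow> ('a \<Rightarrow> 'a) \<Rightarrow> bool" where
  "gen S x = (\<exists>ws. set ws \<subseteq> S \<and> foldr (\<circ>) ws id = x)"

lemma wl_le:
  assumes "set ws \<subseteq> S" "foldr (\<circ>) ws id = x"
  shows "word_length S x \<le> length ws"
  unfolding word_length_def by (rule Least_le) (use assms in blast)

lemma wl_ex:
  assumes "gen S x"
  shows "\<exists>ws. set ws \<subseteq> S \<and> length ws = word_length S x \<and> foldr (\<circ>) ws id = x"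
proof -
  from assms obtain ws where "set ws \<subseteq> S" "foldr (\<circ>) ws id = x" unfolding gen_def by blast
  hence "\<exists>k ws. set ws \<subseteq> S \<and> length ws = k \<and> foldr (\<circ>) ws id = x" by blast
  from LeastI_ex[OF this] show ?thesis unfolding word_length_def .
qed

lemma wl_left:
  assumes "gen S x" "t \<in> S"
  shows "word_length S (t \<circ> x) \<le> word_length S x + 1"
proof -
  obtain ws where w: "set ws \<subseteq> S" "length ws = word_length S x" "foldr (\<circ>) ws id = x"
    using wl_ex[OF assms(1)] by blast
  have "word_length S (t \<circ> x) \<le> length (t # ws)"
    by (rule wl_le) (use w assms in auto)
  thus ?thesis using w by simp
qed

lemma gen_left: "gen S x \<Longrightarrow> t \<in> S \<Longrightarrow> gen S (t \<circ> x)"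
  unfolding gen_def by (metis foldr_Cons insert_subset list.simps(15) o_apply)

lemma foldr_comp: "foldr (\<circ>) ws f = foldr (\<circ>) ws id \<circ> f"
  by (induction ws) (auto simp: comp_assoc)

lemma gen_right: "gen S x \<Longrightarrow> t \<in> S \<Longrightarrow> gen S (x \<circ> t)"
  unfolding gen_def
  apply (elim exE conjE)
  subgoal for ws by (rule exI[of _ "ws @ [t]"]) (auto simp: foldr_append foldr_comp[of ws t])
  done

locale invol =
  fixes S :: "('a \<Rightarrow> 'a) set"
  assumes invS: "\<And>s. s \<in> S \<Longrightarrow> s \<circ> s = id"
begin

lemma bijS: "s \<in> S \<Longrightarrow> bij s"
  using invS by (metis bij_betw_def comp_eq_id_dest inj_on_inverseI o_bij)

lemma invS': "s \<in> S \<Longrightarrow> inv s = s"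
  using invS by (metis inv_unique_comp)

lemma foldr_bij: "set ws \<subseteq> S \<Longrightarrow> bij (foldr (\<circ>) ws id)"
  by (induction ws) (auto intro: bij_comp bijS)

lemma foldr_rev: "set ws \<subseteq> S \<Longrightarrow> foldr (\<circ>) (rev ws) id = inv (foldr (\<circ>) ws id)"
proof (induction ws)
  case Nil thus ?case by simp
next
  case (Cons a ws)
  have e0: "inv (a \<circ> foldr (\<circ>) ws id) = inv (foldr (\<circ>) ws id) \<circ> inv a"
    using Cons.prems by (intro o_inv_distrib bijS foldr_bij) auto
  have e1: "foldr (\<circ>) (rev (a # ws)) id = foldr (\<circ>) (rev ws) id \<circ> a"
    using foldr_comp[of "rev ws" a] by (simp add: foldr_append)
  have e2: "foldr (\<circ>) (a # ws) id = a \<circ> foldr (\<circ>) ws id" by simp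
  show ?case unfolding e1 e2 e0 using Cons invS'[of a] by (simp only: list.set insert_subset)
qed

lemma gen_bij: "gen S x \<Longrightarrow> bij x"
  unfolding gen_def using foldr_bij by blast

lemma gen_inv: "gen S x \<Longrightarrow> gen S (inv x)"
  unfolding gen_def using foldr_rev by (metis set_rev)

lemma wl_inv_le: "gen S x \<Longrightarrow> word_length S (inv x) \<le> word_length S x"
  using wl_ex[of S x] foldr_rev wl_le by (metis length_rev set_rev)

lemma wl_inv: "gen S x \<Longrightarrow> word_length S (inv x) = word_length S x"
  using wl_inv_le[of x] wl_inv_le[of "inv x"] gen_inv[of x] gen_bij[of x]
  by (simp add: inv_inv_eq)

lemma wl_right:
  assumes "gen S x" "t \<in> S"
  shows "word_length S (x \<circ> t) \<le> word_length S x + 1"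
proof -
  have b: "bij x" "bij t" using gen_bij assms bijS by auto
  have "x \<circ> t = inv (t \<circ> inv x)"
    using b invS'[OF assms(2)] by (simp add: o_inv_distrib bij_imp_bij_inv inv_inv_eq)
  hence "word_length S (x \<circ> t) = word_length S (t \<circ> inv x)"
    using wl_inv gen_left gen_inv assms by metis
  also have "\<dots> \<le> word_length S (inv x) + 1" using wl_left gen_inv assms by blast
  finally show ?thesis using wl_inv assms by simp
qed

lemma des_inv_mono:
  assumes gw: "gen S w" and t: "t \<in> S" and dt: "word_length S (w \<circ> t) < word_length S w"
    and finS: "finite S"
  shows "des S (inv (w \<circ> t)) \<le> des S (inv w)"
proof -
  let ?l = "word_length S"
  define u where "u = inv w"
  have gu: "gen S u" using gen_inv gw u_def by blast
  have bw: "bij w" using gen_bij gw by blast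
  have inv_wt: "inv (w \<circ> t) = t \<circ> u"
    using bw bijS[OF t] invS'[OF t] u_def by (simp add: o_inv_distrib)
  have ltu: "?l (t \<circ> u) < ?l u"
  proof -
    have "?l (t \<circ> u) = ?l (inv (w \<circ> t))" using inv_wt by simp
    also have "\<dots> = ?l (w \<circ> t)" using wl_inv gen_right gw t by blast
    also have "\<dots> < ?l w" by fact
    also have "\<dots> = ?l u" using wl_inv gw u_def by simp
    finally show ?thesis .
  qed
  have "{s \<in> S. ?l (inv (w \<circ> t) \<circ> s) < ?l (inv (w \<circ> t))} \<subseteq> {s \<in> S. ?l (inv w \<circ> s) < ?l (inv w)}"
  proof safe
    fix s assume s: "s \<in> S" and h: "?l (inv (w \<circ> t) \<circ> s) < ?l (inv (w \<circ> t))"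
    have h': "?l (t \<circ> u \<circ> s) < ?l (t \<circ> u)" using h inv_wt by (simp add: comp_assoc)
    have "u \<circ> s = t \<circ> (t \<circ> u \<circ> s)" using invS[OF t] by (simp add: comp_assoc[symmetric])
    hence "?l (u \<circ> s) \<le> ?l (t \<circ> u \<circ> s) + 1"
      using wl_left[OF _ t, of "t \<circ> u \<circ> s"] gen_left gen_right gu s t by (metis comp_assoc)
    thus "?l (inv w \<circ> s) < ?l (inv w)" using h' ltu u_def by simp
  qed
  thus ?thesis unfolding des_def by (intro card_mono) (use finS in auto)
qed

end

locale lenchar =
  fixes W :: "('a \<Rightarrow> 'a) set" and g :: "'i \<Rightarrow> ('a \<Rightarrow> 'a)" and I :: "'i set"
    and C :: "'i \<Rightarrow> ('a \<Rightarrow> 'a) \<Rightarrow> bool" and M :: "('a \<Rightarrow> 'a) \<Rightarrow> nat" and k :: nat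
  assumes idW: "id \<in> W" and cl: "\<And>w i. w \<in> W \<Longrightarrow> i \<in> I \<Longrightarrow> w \<circ> g i \<in> W"
    and kpos: "k > 0" and M0: "M id = 0"
    and Mdown: "\<And>w i. w \<in> W \<Longrightarrow> i \<in> I \<Longrightarrow> C i w \<Longrightarrow> M (w \<circ> g i) + k = M w"
    and Mup: "\<And>w i. w \<in> W \<Longrightarrow> i \<in> I \<Longrightarrow> \<not> C i w \<Longrightarrow> M (w \<circ> g i) = M w + k"
    and exdes: "\<And>w. w \<in> W \<Longrightarrow> w \<noteq> id \<Longrightarrow> \<exists>i\<in>I. C i w"
    and ginv: "\<And>i. i \<in> I \<Longrightarrow> g i \<circ> g i = id"
    and ginj: "inj_on g I" and finI: "finite I"
begin

abbreviation "S \<equiv> g ` I"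

sublocale invol S using ginv by unfold_locales auto

lemma word_lower:
  "set ws \<subseteq> S \<Longrightarrow> foldr (\<circ>) ws id \<in> W \<and> M (foldr (\<circ>) ws id) \<le> k * length ws"
proof (induction ws rule: rev_induct)
  case Nil
  have e: "foldr (\<circ>) [] (id::'a\<Rightarrow>'a) = id" by simp
  show ?case unfolding e using idW M0 by (metis le0)
next
  case (snoc s ws)
  then obtain i where i: "i \<in> I" "s = g i" by auto
  define x where "x = foldr (\<circ>) ws id"
  have "set ws \<subseteq> S" using snoc.prems by simp
  note x = snoc.IH[OF this, folded x_def, THEN conjunct1] snoc.IH[OF this, folded x_def, THEN conjunct2]
  have e: "foldr (\<circ>) (ws @ [s]) id = x \<circ> g i" using foldr_comp[of ws s] i unfolding x_def by (simp add: foldr_append)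
  have "M (x \<circ> g i) \<le> M x + k"
  proof (cases "C i x")
    case True thus ?thesis using Mdown[OF x(1) i(1)] by linarith
  next
    case False thus ?thesis using Mup[OF x(1) i(1)] by linarith
  qed
  hence "M (x \<circ> g i) \<le> k * length (ws @ [s])" using x(2) by simp
  thus ?case unfolding e using cl[OF x(1) i(1)] by blast
qed

lemma word_exists:
  "w \<in> W \<Longrightarrow> \<exists>ws. set ws \<subseteq> S \<and> foldr (\<circ>) ws id = w \<and> k * length ws = M w"
proof (induction "M w" arbitrary: w rule: less_induct)
  case less
  show ?case
  proof (cases "w = id")
    case True thus ?thesis using M0 by (intro exI[of _ "[]"]) auto
  next
    case False
    then obtain i where i: "i \<in> I" "C i w" using exdes less.prems by blast
    have w': "w \<circ> g i \<in> W" using cl less.prems i by blast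
    have m: "M (w \<circ> g i) + k = M w" using Mdown less.prems i by blast
    hence "M (w \<circ> g i) < M w" using kpos by simp
    then obtain ws where ws: "set ws \<subseteq> S" "foldr (\<circ>) ws id = w \<circ> g i" "k * length ws = M (w \<circ> g i)"
      using less.hyps w' by blast
    have "foldr (\<circ>) (ws @ [g i]) id = w \<circ> g i \<circ> g i"
      using foldr_comp[of ws "g i"] ws by (simp add: foldr_append)
    also have "\<dots> = w" using ginv[OF i(1)] by (simp add: comp_assoc)
    finally show ?thesis using ws i m by (intro exI[of _ "ws @ [g i]"]) auto
  qed
qed

lemma genW: "w \<in> W \<Longrightarrow> gen S w"
  using word_exists unfolding gen_def by blast

lemma wlM: "w \<in> W \<Longrightarrow> k * word_length S w = M w"
proof -
  assume w: "w \<in> W"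
  obtain ws where ws: "set ws \<subseteq> S" "foldr (\<circ>) ws id = w" "k * length ws = M w"
    using word_exists w by blast
  have "word_length S w \<le> length ws" using wl_le ws by blast
  hence a: "k * word_length S w \<le> M w" using ws mult_le_mono2 by metis
  obtain vs where vs: "set vs \<subseteq> S" "length vs = word_length S w" "foldr (\<circ>) vs id = w"
    using wl_ex genW w by blast
  have "M w \<le> k * word_length S w" using word_lower[OF vs(1)] vs by simp
  with a show ?thesis by simp
qed

lemma desc_iff: "w \<in> W \<Longrightarrow> i \<in> I \<Longrightarrow> word_length S (w \<circ> g i) < word_length S w \<longleftrightarrow> C i w"
proof -
  assume w: "w \<in> W" and i: "i \<in> I"
  have w': "w \<circ> g i \<in> W" using cl w i by blast
  have "word_length S (w \<circ> g i) < word_length S w \<longleftrightarrow> k * word_length S (w \<circ> g i) < k * word_length S w"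
    using kpos by simp
  also have "\<dots> \<longleftrightarrow> M (w \<circ> g i) < M w" using wlM w w' by simp
  also have "\<dots> \<longleftrightarrow> C i w" using Mdown[OF w i] Mup[OF w i] kpos by (cases "C i w") auto
  finally show ?thesis .
qed

lemma C_flip: "w \<in> W \<Longrightarrow> i \<in> I \<Longrightarrow> C i (w \<circ> g i) \<longleftrightarrow> \<not> C i w"
proof -
  assume w: "w \<in> W" and i: "i \<in> I"
  have w': "w \<circ> g i \<in> W" using cl w i by blast
  have ww: "w \<circ> g i \<circ> g i = w" using ginv[OF i] by (simp add: comp_assoc)
  show ?thesis
  proof (cases "C i w")
    case True
    hence "M (w \<circ> g i) + k = M w" using Mdown[OF w i] by blast
    moreover have "C i (w \<circ> g i) \<Longrightarrow> M w + k = M (w \<circ> g i)" using Mdown[OF w' i] ww by metis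
    ultimately have "C i (w \<circ> g i) \<Longrightarrow> False" using kpos by linarith
    thus ?thesis using True by blast
  next
    case False
    hence "M (w \<circ> g i) = M w + k" using Mup[OF w i] by blast
    moreover have "\<not> C i (w \<circ> g i) \<Longrightarrow> M w = M (w \<circ> g i) + k" using Mup[OF w' i] ww by metis
    ultimately have "\<not> C i (w \<circ> g i) \<Longrightarrow> False" using kpos by linarith
    thus ?thesis using False by blast
  qed
qed

lemma des_eq: "w \<in> W \<Longrightarrow> des S w = card {i \<in> I. C i w}"
proof -
  assume w: "w \<in> W"
  have "{s \<in> S. word_length S (w \<circ> s) < word_length S w} = g ` {i \<in> I. C i w}"
    using desc_iff[OF w] by auto
  moreover have "card (g ` {i \<in> I. C i w}) = card {i \<in> I. C i w}"
    by (rule card_image) (use ginj in \<open>auto intro: inj_on_subset\<close>)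
  ultimately show ?thesis unfolding des_def by simp
qed

lemma invW: "w \<in> W \<Longrightarrow> inv w \<in> W"
proof -
  assume w: "w \<in> W"
  obtain ws where ws: "set ws \<subseteq> S" "foldr (\<circ>) ws id = w" using word_exists w by blast
  have "foldr (\<circ>) (rev ws) id = inv w" using foldr_rev ws by blast
  thus ?thesis using word_lower[of "rev ws"] ws by simp
qed

lemma desinv_mono: "w \<in> W \<Longrightarrow> i \<in> I \<Longrightarrow> C i w \<Longrightarrow> des S (inv (w \<circ> g i)) \<le> des S (inv w)"
  using des_inv_mono[of w "g i"] genW desc_iff finI by blast

end

definition far :: "int \<Rightarrow> int \<Rightarrow> bool" where
  "far i j \<longleftrightarrow> 2 \<le> \<bar>i - j\<bar> \<and> ((i = 0 \<or> j = 0) \<longrightarrow> 3 \<le> \<bar>i - j\<bar>)"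

lemma far_sym: "far i j = far j i" unfolding far_def by auto
lemma not_far: "\<not> far i j \<Longrightarrow> \<bar>i - j\<bar> \<le> 2" unfolding far_def by auto

lemma pairing_comb:
  fixes i j k l :: int
  assumes "\<not>(far i j \<and> far i k \<and> far i l)" "\<not>(far j i \<and> far j k \<and> far j l)"
          "\<not>(far k i \<and> far k j \<and> far k l)" "\<not>(far l i \<and> far l j \<and> far l k)"
  shows "(\<bar>i-j\<bar> \<le> 4 \<and> \<bar>k-l\<bar> \<le> 4) \<or> (\<bar>i-k\<bar> \<le> 4 \<and> \<bar>j-l\<bar> \<le> 4) \<or> (\<bar>i-l\<bar> \<le> 4 \<and> \<bar>j-k\<bar> \<le> 4)"
proof -
  have a: "\<bar>i-j\<bar> \<le> 2 \<or> \<bar>i-k\<bar> \<le> 2 \<or> \<bar>i-l\<bar> \<le> 2" using assms(1) not_far by blast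
  have b: "\<bar>j-i\<bar> \<le> 2 \<or> \<bar>j-k\<bar> \<le> 2 \<or> \<bar>j-l\<bar> \<le> 2" using assms(2) not_far by blast
  have c: "\<bar>k-i\<bar> \<le> 2 \<or> \<bar>k-j\<bar> \<le> 2 \<or> \<bar>k-l\<bar> \<le> 2" using assms(3) not_far by blast
  have d: "\<bar>l-i\<bar> \<le> 2 \<or> \<bar>l-j\<bar> \<le> 2 \<or> \<bar>l-k\<bar> \<le> 2" using assms(4) not_far by blast
  show ?thesis using a b c d by (smt (verit))
qed

lemma quad_pow4:
  fixes a :: "'i \<Rightarrow> real"
  shows "(\<Sum>i\<in>I. a i) ^ 4 = (\<Sum>i\<in>I. \<Sum>j\<in>I. \<Sum>k\<in>I. \<Sum>l\<in>I. a i * a j * a k * a l)"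
  by (simp only: sum_distrib_left[symmetric] sum_distrib_right[symmetric] power4_eq_xxxx)

lemma quad_sum1:
  fixes B :: "'i \<Rightarrow> 'i \<Rightarrow> real"
  shows "(\<Sum>i\<in>I. \<Sum>j\<in>I. \<Sum>k\<in>I. \<Sum>l\<in>I. B i j * B k l) = (\<Sum>i\<in>I. \<Sum>j\<in>I. B i j)^2"
  by (simp only: sum_distrib_left[symmetric] sum_distrib_right[symmetric] power2_eq_square)

lemma quad_sum2:
  fixes B :: "'i \<Rightarrow> 'i \<Rightarrow> real"
  shows "(\<Sum>i\<in>I. \<Sum>j\<in>I. \<Sum>k\<in>I. \<Sum>l\<in>I. B i k * B j l) = (\<Sum>i\<in>I. \<Sum>j\<in>I. B i j)^2"
proof -
  have "(\<Sum>i\<in>I. \<Sum>j\<in>I. \<Sum>k\<in>I. \<Sum>l\<in>I. B i k * B j l) = (\<Sum>i\<in>I. \<Sum>k\<in>I. \<Sum>j\<in>I. \<Sum>l\<in>I. B i k * B j l)"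
    by (rule sum.cong[OF refl], rule sum.swap)
  also have "\<dots> = (\<Sum>i\<in>I. \<Sum>j\<in>I. B i j)^2" by (rule quad_sum1)
  finally show ?thesis .
qed

lemma quad_sum3:
  fixes B :: "'i \<Rightarrow> 'i \<Rightarrow> real"
  shows "(\<Sum>i\<in>I. \<Sum>j\<in>I. \<Sum>k\<in>I. \<Sum>l\<in>I. B i l * B j k) = (\<Sum>i\<in>I. \<Sum>j\<in>I. B i j)^2"
proof -
  have "(\<Sum>i\<in>I. \<Sum>j\<in>I. \<Sum>k\<in>I. \<Sum>l\<in>I. B i l * B j k) = (\<Sum>i\<in>I. \<Sum>j\<in>I. \<Sum>l\<in>I. \<Sum>k\<in>I. B i l * B j k)"
    by (rule sum.cong[OF refl], rule sum.cong[OF refl], rule sum.swap)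
  also have "\<dots> = (\<Sum>i\<in>I. \<Sum>l\<in>I. \<Sum>j\<in>I. \<Sum>k\<in>I. B i l * B j k)"
    by (rule sum.cong[OF refl], rule sum.swap)
  also have "\<dots> = (\<Sum>i\<in>I. \<Sum>j\<in>I. B i j)^2" by (rule quad_sum1)
  finally show ?thesis .
qed

lemma quart_ineq: "(a + b :: real) ^ 4 \<le> 8 * (a ^ 4 + b ^ 4)"
proof -
  have 1: "(a + b)^2 \<le> 2 * (a^2 + b^2)" using sum_squares_ge_zero[of "a - b" 0]
    by (simp add: power2_eq_square algebra_simps)
  have "(a + b)^4 = ((a+b)^2)^2" by simp
  also have "\<dots> \<le> (2 * (a^2 + b^2))^2" using 1 by (intro power_mono) auto
  also have "\<dots> \<le> 8 * (a^4 + b^4)"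
  proof -
    have "0 \<le> (a^2 - b^2)^2" by simp
    thus ?thesis by (simp add: power2_eq_square power4_eq_xxxx algebra_simps)
  qed
  finally show ?thesis .
qed

lemma card_near: "finite I \<Longrightarrow> (\<Sum>j\<in>I. of_bool (\<bar>i - j\<bar> \<le> (4::int)) :: real) \<le> 9"
proof -
  assume f: "finite I"
  have "(\<Sum>j\<in>I. of_bool (\<bar>i - j\<bar> \<le> (4::int)) :: real) = card (I \<inter> {j. \<bar>i - j\<bar> \<le> 4})" using f by simp
  also have "card (I \<inter> {j. \<bar>i - j\<bar> \<le> 4}) \<le> card {i - 4..i + 4}"
    by (rule card_mono) auto
  finally show ?thesis by simp
qed

locale momsetup =
  fixes W :: "(int \<Rightarrow> int) set" and g :: "int \<Rightarrow> int \<Rightarrow> int" and I :: "int set"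
    and C :: "int \<Rightarrow> (int \<Rightarrow> int) \<Rightarrow> bool" and Dp :: "(int \<Rightarrow> int) \<Rightarrow> nat" and A :: "int set"
  assumes finW: "finite W" and neW: "W \<noteq> {}" and finI: "finite I"
    and cl: "\<And>w i. w \<in> W \<Longrightarrow> i \<in> I \<Longrightarrow> w \<circ> g i \<in> W"
    and ginv: "\<And>i. i \<in> I \<Longrightarrow> g i \<circ> g i = id"
    and flip: "\<And>w i. w \<in> W \<Longrightarrow> i \<in> I \<Longrightarrow> C i (w \<circ> g i) \<longleftrightarrow> \<not> C i w"
    and farinv: "\<And>w i j. w \<in> W \<Longrightarrow> i \<in> I \<Longrightarrow> j \<in> I \<Longrightarrow> far i j \<Longrightarrow> C j (w \<circ> g i) \<longleftrightarrow> C j w"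
    and Dpmono: "\<And>w i. w \<in> W \<Longrightarrow> i \<in> I \<Longrightarrow> C i w \<Longrightarrow> Dp (w \<circ> g i) \<le> Dp w"
    and Dpdist: "\<And>h::nat \<Rightarrow> real. (\<Sum>w\<in>W. h (Dp w)) = (\<Sum>w\<in>W. h (card {i\<in>I. C i w}))"
    and AI: "A \<subseteq> I"
    and Atrip: "\<And>i. i \<in> A \<Longrightarrow> i - 1 \<in> I \<and> i + 1 \<in> I"
    and Afar: "\<And>i j. i \<in> A \<Longrightarrow> j \<in> I \<Longrightarrow> j \<notin> {i - 1, i, i + 1} \<Longrightarrow> far i j"
    and Apair: "\<And>i j. i \<in> A \<Longrightarrow> j \<in> A \<Longrightarrow> i \<noteq> j \<Longrightarrow> far i j"
    and p16a: "\<And>i. i \<in> A \<Longrightarrow> 6 * card {w\<in>W. C (i - 1) w \<and> C i w} = card W"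
    and p16b: "\<And>i. i \<in> A \<Longrightarrow> 6 * card {w\<in>W. C i w \<and> C (i + 1) w} = card W"
begin

definition X :: "int \<Rightarrow> (int \<Rightarrow> int) \<Rightarrow> real" where "X i w = of_bool (C i w)"
definition Y :: "int \<Rightarrow> (int \<Rightarrow> int) \<Rightarrow> real" where "Y i w = X i w - 1/2"
definition D :: "(int \<Rightarrow> int) \<Rightarrow> real" where "D w = real (card {i\<in>I. C i w})"
definition T :: "(int \<Rightarrow> int) \<Rightarrow> real" where "T w = D w + real (Dp w)"

lemma sum_shift: "i \<in> I \<Longrightarrow> (\<Sum>w\<in>W. f (w \<circ> g i)) = (\<Sum>w\<in>W. f w)"
  by (rule sum.reindex_bij_witness[of _ "\<lambda>w. w \<circ> g i" "\<lambda>w. w \<circ> g i"])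
     (auto simp: cl comp_assoc ginv)

lemma Y_flip: "w \<in> W \<Longrightarrow> i \<in> I \<Longrightarrow> Y i (w \<circ> g i) = - Y i w"
  by (simp add: Y_def X_def flip)

lemma Y_far: "w \<in> W \<Longrightarrow> i \<in> I \<Longrightarrow> j \<in> I \<Longrightarrow> far i j \<Longrightarrow> Y j (w \<circ> g i) = Y j w"
  by (simp add: Y_def X_def farinv)

lemma pair_zero:
  assumes i: "i \<in> I" and h: "\<And>w. w \<in> W \<Longrightarrow> h (w \<circ> g i) = h w"
  shows "(\<Sum>w\<in>W. Y i w * h w) = 0"
proof -
  have "(\<Sum>w\<in>W. Y i w * h w) = (\<Sum>w\<in>W. Y i (w \<circ> g i) * h (w \<circ> g i))"
    using sum_shift[OF i, of "\<lambda>w. Y i w * h w"] by simp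
  also have "\<dots> = (\<Sum>w\<in>W. - (Y i w * h w))" using i h by (intro sum.cong) (auto simp: Y_flip)
  finally show ?thesis by (simp add: sum_negf)
qed

lemma sumY: "i \<in> I \<Longrightarrow> (\<Sum>w\<in>W. Y i w) = 0"
  using pair_zero[of i "\<lambda>_. 1"] by simp

lemma sumX: "i \<in> I \<Longrightarrow> (\<Sum>w\<in>W. X i w) = card W / 2"
  using sumY[of i] unfolding Y_def by (simp add: sum_subtractf)

lemma Ysq: "Y i w * Y i w = 1/4"
  by (simp add: Y_def X_def)

lemma absY: "\<bar>Y i w\<bar> = 1/2"
  by (simp add: Y_def X_def)

lemma sumYY: "(\<Sum>w\<in>W. Y i w * Y i w) = card W / 4"
  by (simp add: Ysq)

lemma sumYfar: "i \<in> I \<Longrightarrow> j \<in> I \<Longrightarrow> far i j \<Longrightarrow> (\<Sum>w\<in>W. Y i w * Y j w) = 0"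
  by (rule pair_zero) (auto simp: Y_far)

lemma sumXX: "(\<Sum>w\<in>W. X i w * X j w) = card {w\<in>W. C i w \<and> C j w}"
proof -
  have "(\<Sum>w\<in>W. X i w * X j w) = (\<Sum>w\<in>W. of_bool (C i w \<and> C j w))"
    by (intro sum.cong) (auto simp: X_def)
  also have "\<dots> = card {w\<in>W. C i w \<and> C j w}" using finW by (simp add: Int_def conj_commute)
  finally show ?thesis .
qed

lemma sumYY_gen: "i \<in> I \<Longrightarrow> j \<in> I \<Longrightarrow>
   (\<Sum>w\<in>W. Y i w * Y j w) = card {w\<in>W. C i w \<and> C j w} - card W / 4"
proof -
  assume ij: "i \<in> I" "j \<in> I"
  have "(\<Sum>w\<in>W. Y i w * Y j w) = (\<Sum>w\<in>W. X i w * X j w - X i w / 2 - X j w / 2 + 1/4)"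
    by (intro sum.cong) (auto simp: Y_def algebra_simps)
  also have "\<dots> = (\<Sum>w\<in>W. X i w * X j w) - (\<Sum>w\<in>W. X i w) / 2 - (\<Sum>w\<in>W. X j w) / 2 + card W / 4"
    by (simp add: sum.distrib sum_subtractf sum_divide_distrib)
  finally show ?thesis using sumX ij sumXX by simp
qed

lemma D_eq: "D w = (\<Sum>i\<in>I. X i w)"
  using finI by (simp add: D_def X_def Int_def)

lemma D_centered: "D w - card I / 2 = (\<Sum>i\<in>I. Y i w)"
  by (simp add: D_eq Y_def sum_subtractf)

lemma sumD: "(\<Sum>w\<in>W. D w) = card I * card W / 2"
proof -
  have "(\<Sum>w\<in>W. D w) = (\<Sum>i\<in>I. \<Sum>w\<in>W. X i w)" by (simp add: D_eq sum.swap[of _ W])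
  also have "\<dots> = (\<Sum>i\<in>I. card W / 2)" by (intro sum.cong) (auto simp: sumX)
  finally show ?thesis by simp
qed

lemma sumDp: "(\<Sum>w\<in>W. real (Dp w)) = (\<Sum>w\<in>W. D w)"
  using Dpdist[of real] by (simp add: D_def)

lemma sumT: "(\<Sum>w\<in>W. T w) = card I * card W"
  by (simp add: T_def sum.distrib sumDp sumD)

lemma Dp_pair: "i \<in> I \<Longrightarrow> (\<Sum>w\<in>W. Y i w * real (Dp w)) \<ge> 0"
proof -
  assume i: "i \<in> I"
  let ?S = "(\<Sum>w\<in>W. Y i w * real (Dp w))"
  have "?S = (\<Sum>w\<in>W. Y i (w \<circ> g i) * real (Dp (w \<circ> g i)))"
    using sum_shift[OF i, of "\<lambda>w. Y i w * real (Dp w)"] by simp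
  also have "\<dots> = (\<Sum>w\<in>W. - (Y i w * real (Dp (w \<circ> g i))))" using i by (intro sum.cong) (auto simp: Y_flip)
  finally have "2 * ?S = (\<Sum>w\<in>W. Y i w * (real (Dp w) - real (Dp (w \<circ> g i))))"
    by (simp add: sum_negf algebra_simps sum_subtractf)
  also have "\<dots> \<ge> 0"
  proof (rule sum_nonneg)
    fix w assume w: "w \<in> W"
    show "Y i w * (real (Dp w) - real (Dp (w \<circ> g i))) \<ge> 0"
    proof (cases "C i w")
      case True thus ?thesis using Dpmono[OF w i True] by (simp add: Y_def X_def)
    next
      case False
      hence "C i (w \<circ> g i)" using flip w i by blast
      hence "Dp (w \<circ> g i \<circ> g i) \<le> Dp (w \<circ> g i)" using Dpmono cl w i by blast
      hence "Dp w \<le> Dp (w \<circ> g i)" using ginv[OF i] by (simp add: comp_assoc)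
      thus ?thesis using False by (simp add: Y_def X_def)
    qed
  qed
  finally show ?thesis by simp
qed

lemma cov_DY: "i \<in> A \<Longrightarrow> (\<Sum>w\<in>W. Y i w * D w) = card W / 12"
proof -
  assume iA: "i \<in> A"
  have iI: "i \<in> I" "i - 1 \<in> I" "i + 1 \<in> I" using AI iA Atrip by auto
  have "(\<Sum>w\<in>W. Y i w * D w) = (\<Sum>j\<in>I. \<Sum>w\<in>W. Y i w * X j w)"
    by (simp add: D_eq sum_distrib_left sum.swap[of _ W])
  also have "\<dots> = (\<Sum>j\<in>I. \<Sum>w\<in>W. Y i w * Y j w)"
  proof (rule sum.cong[OF refl])
    fix j assume j: "j \<in> I"
    have "(\<Sum>w\<in>W. Y i w * X j w) = (\<Sum>w\<in>W. Y i w * Y j w + Y i w / 2)"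
      by (intro sum.cong) (auto simp: Y_def[of j] right_diff_distrib)
    also have "\<dots> = (\<Sum>w\<in>W. Y i w * Y j w)"
      using sumY[OF iI(1)] by (simp add: sum.distrib flip: sum_divide_distrib)
    finally show "(\<Sum>w\<in>W. Y i w * X j w) = (\<Sum>w\<in>W. Y i w * Y j w)" .
  qed
  also have "\<dots> = (\<Sum>j\<in>{i - 1, i, i + 1}. \<Sum>w\<in>W. Y i w * Y j w)"
  proof (rule sum.mono_neutral_right)
    show "finite I" by (rule finI)
    show "{i - 1, i, i + 1} \<subseteq> I" using iI by auto
    show "\<forall>j\<in>I - {i - 1, i, i + 1}. (\<Sum>w\<in>W. Y i w * Y j w) = 0"
      using sumYfar Afar iA iI by auto
  qed
  also have "\<dots> = (\<Sum>w\<in>W. Y i w * Y (i - 1) w) + (\<Sum>w\<in>W. Y i w * Y i w) + (\<Sum>w\<in>W. Y i w * Y (i + 1) w)"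
    by simp
  also have "\<dots> = card W / 12"
    using sumYY_gen[of i "i - 1"] sumYY_gen[of i "i + 1"] sumYY[of i] iI p16a[OF iA] p16b[OF iA]
    by (simp add: conj_commute) linarith?
  finally show ?thesis .
qed

definition U :: "(int \<Rightarrow> int) \<Rightarrow> real" where "U w = T w - card I"
definition Z :: "(int \<Rightarrow> int) \<Rightarrow> real" where "Z w = (\<Sum>i\<in>A. Y i w)"

lemma finA: "finite A" using finite_subset[OF AI finI] .

lemma sumUY: "i \<in> A \<Longrightarrow> (\<Sum>w\<in>W. U w * Y i w) \<ge> card W / 12"
proof -
  assume iA: "i \<in> A"
  have iI: "i \<in> I" using AI iA by auto
  have "(\<Sum>w\<in>W. U w * Y i w) = (\<Sum>w\<in>W. Y i w * D w) + (\<Sum>w\<in>W. Y i w * real (Dp w)) - card I * (\<Sum>w\<in>W. Y i w)"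
    by (simp add: U_def T_def algebra_simps sum.distrib sum_subtractf sum_distrib_left)
  thus ?thesis using cov_DY[OF iA] Dp_pair[OF iI] sumY[OF iI] by simp
qed

lemma sumUZ: "(\<Sum>w\<in>W. U w * Z w) \<ge> card A * card W / 12"
proof -
  have "(\<Sum>w\<in>W. U w * Z w) = (\<Sum>i\<in>A. \<Sum>w\<in>W. U w * Y i w)"
    by (simp add: Z_def sum_distrib_left sum.swap[of _ W])
  also have "\<dots> \<ge> (\<Sum>i\<in>A. card W / 12)" by (rule sum_mono) (use sumUY in auto)
  finally show ?thesis by simp
qed

lemma sumZZ: "(\<Sum>w\<in>W. Z w * Z w) = card A * card W / 4"
proof -
  have "(\<Sum>w\<in>W. Z w * Z w) = (\<Sum>i\<in>A. \<Sum>j\<in>A. \<Sum>w\<in>W. Y i w * Y j w)"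
    by (simp add: Z_def sum_product sum.swap[of _ W])
  also have "\<dots> = (\<Sum>i\<in>A. card W / 4)"
  proof (rule sum.cong[OF refl])
    fix i assume iA: "i \<in> A"
    have "(\<Sum>j\<in>A. \<Sum>w\<in>W. Y i w * Y j w) = (\<Sum>j\<in>{i}. \<Sum>w\<in>W. Y i w * Y j w)"
    proof (rule sum.mono_neutral_right)
      show "finite A" by (rule finA)
      show "{i} \<subseteq> A" using iA by auto
      show "\<forall>j\<in>A - {i}. (\<Sum>w\<in>W. Y i w * Y j w) = 0" using sumYfar Apair iA AI by blast
    qed
    also have "\<dots> = card W / 4" using sumYY by simp
    finally show "(\<Sum>j\<in>A. \<Sum>w\<in>W. Y i w * Y j w) = card W / 4" .
  qed
  finally show ?thesis by simp
qed

lemma lower: "(\<Sum>w\<in>W. U w ^ 4) \<ge> (card A)^2 * card W / 1296"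
proof (cases "A = {}")
  case True thus ?thesis by (simp add: sum_nonneg)
next
  case False
  have Apos: "real (card A) > 0" using False finA by (simp add: card_gt_0_iff)
  have Npos: "real (card W) > 0" using neW finW by (simp add: card_gt_0_iff)
  define a where "a = (\<Sum>w\<in>W. U w * Z w)"
  define b where "b = (\<Sum>w\<in>W. (U w)^2)"
  define z where "z = (\<Sum>w\<in>W. (Z w)^2)"
  have cs: "a^2 \<le> b * z" unfolding a_def b_def z_def by (rule Cauchy_Schwarz_ineq_sum)
  have z: "z = card A * card W / 4" unfolding z_def using sumZZ by (simp add: power2_eq_square)
  have a: "a \<ge> card A * card W / 12" unfolding a_def by (rule sumUZ)
  have "(card A * card W / 12)^2 \<le> a^2" using a Apos Npos by (intro power_mono) auto
  hence "(card A * card W / 12)^2 \<le> b * (card A * card W / 4)" using cs z by simp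
  hence "(card A * card W) * (card A * card W) \<le> (card A * card W) * (36 * b)"
    by (simp add: power2_eq_square algebra_simps)
  hence b: "card A * card W / 36 \<le> b" using Apos Npos by (simp add: mult_le_cancel_left_pos)
  have cs2: "b^2 \<le> (\<Sum>w\<in>W. (U w ^ 4)) * card W"
    using Cauchy_Schwarz_ineq_sum[of "\<lambda>w. (U w)^2" "\<lambda>_. 1" W] unfolding b_def
    by (simp add: power2_eq_square power4_eq_xxxx mult.assoc)
  have "(card A * card W / 36)^2 \<le> b^2" using b Apos Npos by (intro power_mono) auto
  hence "(card A * card W / 36)^2 \<le> (\<Sum>w\<in>W. (U w ^ 4)) * card W" using cs2 by linarith
  hence "card W * ((card A)^2 * card W / 1296) \<le> card W * (\<Sum>w\<in>W. (U w ^ 4))"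
    by (simp add: power2_eq_square algebra_simps)
  thus ?thesis using Npos by (simp add: mult_le_cancel_left_pos)
qed

definition Q :: "int \<Rightarrow> int \<Rightarrow> int \<Rightarrow> int \<Rightarrow> real" where
  "Q i j k l = (\<Sum>w\<in>W. Y i w * Y j w * Y k w * Y l w)"

lemma Q_iso: "i \<in> I \<Longrightarrow> j \<in> I \<Longrightarrow> k \<in> I \<Longrightarrow> l \<in> I \<Longrightarrow> far i j \<Longrightarrow> far i k \<Longrightarrow> far i l \<Longrightarrow> Q i j k l = 0"
  unfolding Q_def mult.assoc by (rule pair_zero) (auto simp: Y_far)

lemma Q_sym1: "Q i j k l = Q j i k l" unfolding Q_def by (simp add: ac_simps)
lemma Q_sym2: "Q i j k l = Q k j i l" unfolding Q_def by (simp add: ac_simps)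
lemma Q_sym3: "Q i j k l = Q l j k i" unfolding Q_def by (simp add: ac_simps)

lemma absQ: "\<bar>Q i j k l\<bar> \<le> card W / 16"
proof -
  have "\<bar>Q i j k l\<bar> \<le> (\<Sum>w\<in>W. \<bar>Y i w * Y j w * Y k w * Y l w\<bar>)" unfolding Q_def by (rule sum_abs)
  also have "\<dots> = (\<Sum>w\<in>W. 1/16)" by (simp add: abs_mult absY)
  finally show ?thesis by simp
qed

definition B :: "int \<Rightarrow> int \<Rightarrow> real" where "B i j = of_bool (\<bar>i - j\<bar> \<le> 4)"

lemma Qbound:
  assumes "i \<in> I" "j \<in> I" "k \<in> I" "l \<in> I"
  shows "\<bar>Q i j k l\<bar> \<le> card W / 16 * (B i j * B k l + B i k * B j l + B i l * B j k)"
proof (cases "(far i j \<and> far i k \<and> far i l) \<or> (far j i \<and> far j k \<and> far j l) \<or>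
              (far k i \<and> far k j \<and> far k l) \<or> (far l i \<and> far l j \<and> far l k)")
  case True
  hence "Q i j k l = 0" using Q_iso assms Q_sym1 Q_sym2 Q_sym3 by metis
  thus ?thesis by (simp add: B_def)
next
  case False
  hence "(\<bar>i-j\<bar> \<le> 4 \<and> \<bar>k-l\<bar> \<le> 4) \<or> (\<bar>i-k\<bar> \<le> 4 \<and> \<bar>j-l\<bar> \<le> 4) \<or> (\<bar>i-l\<bar> \<le> 4 \<and> \<bar>j-k\<bar> \<le> 4)"
    using pairing_comb by blast
  hence "1 \<le> B i j * B k l + B i k * B j l + B i l * B j k" by (auto simp: B_def)
  moreover have "card W / 16 \<ge> (0::real)" by simp
  ultimately have "card W / 16 \<le> card W / 16 * (B i j * B k l + B i k * B j l + B i l * B j k)"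
    by (metis mult.right_neutral mult_left_mono)
  thus ?thesis using absQ[of i j k l] by linarith
qed

lemma sumB: "(\<Sum>i\<in>I. \<Sum>j\<in>I. B i j) \<le> 9 * real (card I)"
proof -
  have "(\<Sum>i\<in>I. \<Sum>j\<in>I. B i j) \<le> (\<Sum>i\<in>I. 9)"
    by (rule sum_mono) (use card_near[OF finI] in \<open>auto simp: B_def\<close>)
  thus ?thesis by simp
qed

lemma upperD: "(\<Sum>w\<in>W. (D w - card I / 2) ^ 4) \<le> 243 / 16 * (card I)^2 * card W"
proof -
  have "(\<Sum>w\<in>W. (D w - card I / 2) ^ 4) = (\<Sum>i\<in>I. \<Sum>j\<in>I. \<Sum>k\<in>I. \<Sum>l\<in>I. Q i j k l)"
    by (simp add: D_centered quad_pow4 Q_def sum.swap[of _ W])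
  also have "\<dots> \<le> (\<Sum>i\<in>I. \<Sum>j\<in>I. \<Sum>k\<in>I. \<Sum>l\<in>I. card W / 16 * (B i j * B k l + B i k * B j l + B i l * B j k))"
    by (intro sum_mono) (meson Qbound abs_le_D1)
  also have "\<dots> = card W / 16 * (\<Sum>i\<in>I. \<Sum>j\<in>I. \<Sum>k\<in>I. \<Sum>l\<in>I. B i j * B k l)
     + card W / 16 * (\<Sum>i\<in>I. \<Sum>j\<in>I. \<Sum>k\<in>I. \<Sum>l\<in>I. B i k * B j l)
     + card W / 16 * (\<Sum>i\<in>I. \<Sum>j\<in>I. \<Sum>k\<in>I. \<Sum>l\<in>I. B i l * B j k)"
    by (simp add: sum_distrib_left sum.distrib distrib_left)
  also have "\<dots> = card W / 16 * (3 * (\<Sum>i\<in>I. \<Sum>j\<in>I. B i j)^2)"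
    by (simp only: quad_sum1 quad_sum2 quad_sum3)
  also have "\<dots> \<le> card W / 16 * (3 * (9 * real (card I))^2)"
  proof -
    have "0 \<le> (\<Sum>i\<in>I. \<Sum>j\<in>I. B i j)" by (intro sum_nonneg) (auto simp: B_def)
    hence "(\<Sum>i\<in>I. \<Sum>j\<in>I. B i j)^2 \<le> (9 * real (card I))^2" using sumB by (intro power_mono) auto
    thus ?thesis by (intro mult_left_mono) auto
  qed
  also have "\<dots> = 243 / 16 * (card I)^2 * card W" by (simp add: power2_eq_square)
  finally show ?thesis .
qed

lemma upper: "(\<Sum>w\<in>W. U w ^ 4) \<le> 243 * (card I)^2 * card W"
proof -
  have "(\<Sum>w\<in>W. U w ^ 4) \<le> (\<Sum>w\<in>W. 8 * ((D w - card I / 2) ^ 4 + (real (Dp w) - card I / 2) ^ 4))"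
  proof (rule sum_mono)
    fix w
    have e: "U w = (D w - card I / 2) + (real (Dp w) - card I / 2)" by (simp add: U_def T_def)
    show "U w ^ 4 \<le> 8 * ((D w - card I / 2) ^ 4 + (real (Dp w) - card I / 2) ^ 4)"
      by (subst e) (rule quart_ineq)
  qed
  also have "\<dots> = 8 * (\<Sum>w\<in>W. (D w - card I / 2) ^ 4) + 8 * (\<Sum>w\<in>W. (real (Dp w) - card I / 2) ^ 4)"
    by (simp add: sum.distrib sum_distrib_left)
  also have "(\<Sum>w\<in>W. (real (Dp w) - card I / 2) ^ 4) = (\<Sum>w\<in>W. (D w - card I / 2) ^ 4)"
    using Dpdist[of "\<lambda>k. (real k - card I / 2) ^ 4"] by (simp add: D_def)
  finally have "(\<Sum>w\<in>W. U w ^ 4) \<le> 16 * (\<Sum>w\<in>W. (D w - card I / 2) ^ 4)" by simp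
  also have "\<dots> \<le> 16 * (243 / 16 * (card I)^2 * card W)" using upperD by linarith
  finally show ?thesis by (simp add: ac_simps)
qed

end

lemma transp_invol [simp]: "transp a b (transp a b x) = x"
  by (auto simp: transp_def)

lemma transp_comp_invol: "transp a b \<circ> transp a b = id"
  by (auto simp: transp_def)

lemma bij_transp: "bij (transp a b)"
  by (metis bij_betw_def comp_eq_id_dest inj_on_inverseI o_bij transp_comp_invol)

definition invc :: "int set \<Rightarrow> (int \<Rightarrow> int) \<Rightarrow> nat" where
  "invc P w = card {(p,q) \<in> P \<times> P. p < q \<and> w q < w p}"

lemma card_as_sum: "finite A \<Longrightarrow> int (card {x \<in> A. \<Phi> x}) = (\<Sum>x\<in>A. of_bool (\<Phi> x))"
  by (simp add: Int_def conj_commute)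

lemma invc_sum: "finite P \<Longrightarrow> int (invc P w) = (\<Sum>x\<in>P \<times> P. of_bool (case x of (p,q) \<Rightarrow> p < q \<and> w q < w p))"
proof -
  assume f: "finite P"
  have "{(p,q) \<in> P \<times> P. p < q \<and> w q < w p} = P \<times> P \<inter> {x. case x of (p,q) \<Rightarrow> p < q \<and> w q < w p}" by auto
  thus ?thesis unfolding invc_def using f by simp
qed

lemma invc_diff:
  assumes fin: "finite P" and sP: "\<And>x. x \<in> P \<Longrightarrow> \<sigma> x \<in> P" and inv: "\<And>x. \<sigma> (\<sigma> x) = x"
    and K: "K \<subseteq> P \<times> P"
    and off: "\<And>p q. p \<in> P \<Longrightarrow> q \<in> P \<Longrightarrow> (p,q) \<notin> K \<Longrightarrow> (\<sigma> p < \<sigma> q \<longleftrightarrow> p < q)"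
  shows "int (invc P (w \<circ> \<sigma>)) = int (invc P w) +
     (\<Sum>(p,q)\<in>K. of_bool (\<sigma> p < \<sigma> q \<and> w q < w p) - of_bool (p < q \<and> w q < w p))"
proof -
  have fPP: "finite (P \<times> P)" using fin by simp
  have e1: "int (invc P (w \<circ> \<sigma>)) = (\<Sum>x\<in>P \<times> P. of_bool (case x of (p,q) \<Rightarrow> \<sigma> p < \<sigma> q \<and> w q < w p))"
    unfolding invc_sum[OF fin]
    by (rule sum.reindex_bij_witness[of _ "\<lambda>(p,q). (\<sigma> p, \<sigma> q)" "\<lambda>(p,q). (\<sigma> p, \<sigma> q)"])
       (auto simp: inv sP)
  have e2: "int (invc P w) = (\<Sum>x\<in>P \<times> P. of_bool (case x of (p,q) \<Rightarrow> p < q \<and> w q < w p))"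
    by (rule invc_sum[OF fin])
  have "(\<Sum>x\<in>P \<times> P. of_bool (case x of (p,q) \<Rightarrow> \<sigma> p < \<sigma> q \<and> w q < w p) - of_bool (case x of (p,q) \<Rightarrow> p < q \<and> w q < w p))
     = (\<Sum>x\<in>K. of_bool (case x of (p,q) \<Rightarrow> \<sigma> p < \<sigma> q \<and> w q < w p) - (of_bool (case x of (p,q) \<Rightarrow> p < q \<and> w q < w p) :: int))"
    by (rule sum.mono_neutral_right[OF fPP K]) (use off in auto)
  thus ?thesis unfolding e1 e2 by (simp add: sum_subtractf case_prod_beta')
qed

lemma card_comp_invol:
  assumes fin: "finite W" and cl: "\<And>w. w \<in> W \<Longrightarrow> w \<circ> a \<in> W" and ia: "\<And>x. a (a x) = x"
  shows "card {w \<in> W. \<Phi> (w \<circ> a)} = card {w \<in> W. \<Phi> w}"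
proof (rule bij_betw_same_card[of "\<lambda>w. w \<circ> a"], rule bij_betw_byWitness[of _ "\<lambda>w. w \<circ> a"])
  have aa: "\<And>w. w \<circ> a \<circ> a = w" using ia by (auto simp: fun_eq_iff)
  show "\<forall>x\<in>{w \<in> W. \<Phi> (w \<circ> a)}. x \<circ> a \<circ> a = x" using aa by blast
  show "\<forall>y\<in>{w \<in> W. \<Phi> w}. y \<circ> a \<circ> a = y" using aa by blast
  show "(\<lambda>w. w \<circ> a) ` {w \<in> W. \<Phi> (w \<circ> a)} \<subseteq> {w \<in> W. \<Phi> w}" using cl by auto
  show "(\<lambda>w. w \<circ> a) ` {w \<in> W. \<Phi> w} \<subseteq> {w \<in> W. \<Phi> (w \<circ> a)}"
  proof
    fix x assume "x \<in> (\<lambda>w. w \<circ> a) ` {w \<in> W. \<Phi> w}"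
    then obtain w where w: "w \<in> W" "\<Phi> w" "x = w \<circ> a" by auto
    have "x \<circ> a = w" using aa[of w] w(3) by simp
    thus "x \<in> {w \<in> W. \<Phi> (w \<circ> a)}" using cl[OF w(1)] w by simp
  qed
qed

lemma three_orders:
  fixes x y z :: int
  assumes "x \<noteq> y" "y \<noteq> z" "x \<noteq> z"
  shows "of_bool (z < y \<and> y < x) + of_bool (y < z \<and> z < x) + of_bool (x < z \<and> z < y)
       + of_bool (x < y \<and> y < z) + of_bool (y < x \<and> x < z) + of_bool (z < x \<and> x < y) = (1::int)"
  using assms by (cases "x < y"; cases "y < z"; cases "x < z") auto

lemma six_orders:
  fixes W :: "(int \<Rightarrow> int) set" and a b :: "int \<Rightarrow> int" and j :: int
  assumes fin: "finite W"
    and clA: "\<And>w. w \<in> W \<Longrightarrow> w \<circ> a \<in> W" and clB: "\<And>w. w \<in> W \<Longrightarrow> w \<circ> b \<in> W"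
    and ia: "\<And>x. a (a x) = x" and ib: "\<And>x. b (b x) = x"
    and a1: "a j = j+1" "a (j+1) = j" "a (j+2) = j+2"
    and b1: "b j = j" "b (j+1) = j+2" "b (j+2) = j+1"
    and injW: "\<And>w. w \<in> W \<Longrightarrow> inj w"
  shows "6 * card {w \<in> W. w (j+1) < w j \<and> w (j+2) < w (j+1)} = card W"
proof -
  define E where "E = (\<lambda>\<Phi>::int \<Rightarrow> int \<Rightarrow> int \<Rightarrow> bool. card {w \<in> W. \<Phi> (w j) (w (j+1)) (w (j+2))})"
  have sa: "E (\<lambda>x y z. \<Phi> y x z) = E \<Phi>" for \<Phi>
  proof -
    have "{w \<in> W. \<Phi> (w (j+1)) (w j) (w (j+2))} = {w \<in> W. (\<lambda>w. \<Phi> (w j) (w (j+1)) (w (j+2))) (w \<circ> a)}"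
      by (simp only: o_apply a1)
    hence "E (\<lambda>x y z. \<Phi> y x z) = card {w \<in> W. (\<lambda>w. \<Phi> (w j) (w (j+1)) (w (j+2))) (w \<circ> a)}"
      unfolding E_def by simp
    also have "\<dots> = E \<Phi>" unfolding E_def by (rule card_comp_invol[OF fin clA ia])
    finally show ?thesis .
  qed
  have sb: "E (\<lambda>x y z. \<Phi> x z y) = E \<Phi>" for \<Phi>
  proof -
    have "{w \<in> W. \<Phi> (w j) (w (j+2)) (w (j+1))} = {w \<in> W. (\<lambda>w. \<Phi> (w j) (w (j+1)) (w (j+2))) (w \<circ> b)}"
      by (simp only: o_apply b1)
    hence "E (\<lambda>x y z. \<Phi> x z y) = card {w \<in> W. (\<lambda>w. \<Phi> (w j) (w (j+1)) (w (j+2))) (w \<circ> b)}"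
      unfolding E_def by simp
    also have "\<dots> = E \<Phi>" unfolding E_def by (rule card_comp_invol[OF fin clB ib])
    finally show ?thesis .
  qed
  have c2: "E (\<lambda>x y z. y < z \<and> z < x) = E (\<lambda>x y z. z < y \<and> y < x)" by (rule sb[of "\<lambda>x y z. z < y \<and> y < x"])
  have c3: "E (\<lambda>x y z. x < z \<and> z < y) = E (\<lambda>x y z. y < z \<and> z < x)" by (rule sa[of "\<lambda>x y z. y < z \<and> z < x"])
  have c4: "E (\<lambda>x y z. x < y \<and> y < z) = E (\<lambda>x y z. x < z \<and> z < y)" by (rule sb[of "\<lambda>x y z. x < z \<and> z < y"])
  have c5: "E (\<lambda>x y z. y < x \<and> x < z) = E (\<lambda>x y z. x < y \<and> y < z)" by (rule sa[of "\<lambda>x y z. x < y \<and> y < z"])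
  have c6: "E (\<lambda>x y z. z < x \<and> x < y) = E (\<lambda>x y z. y < x \<and> x < z)" by (rule sb[of "\<lambda>x y z. y < x \<and> x < z"])
  have "int (card W) = (\<Sum>w\<in>W. 1)" by simp
  also have "\<dots> = (\<Sum>w\<in>W. of_bool (w (j+2) < w (j+1) \<and> w (j+1) < w j) + of_bool (w (j+1) < w (j+2) \<and> w (j+2) < w j)
       + of_bool (w j < w (j+2) \<and> w (j+2) < w (j+1)) + of_bool (w j < w (j+1) \<and> w (j+1) < w (j+2))
       + of_bool (w (j+1) < w j \<and> w j < w (j+2)) + of_bool (w (j+2) < w j \<and> w j < w (j+1)))"
  proof (rule sum.cong[OF refl])
    fix w assume w: "w \<in> W"
    have d: "w j \<noteq> w (j+1)" "w (j+1) \<noteq> w (j+2)" "w j \<noteq> w (j+2)"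
      using inj_eq[OF injW[OF w]] by simp_all
    show "1 = of_bool (w (j+2) < w (j+1) \<and> w (j+1) < w j) + of_bool (w (j+1) < w (j+2) \<and> w (j+2) < w j)
       + of_bool (w j < w (j+2) \<and> w (j+2) < w (j+1)) + of_bool (w j < w (j+1) \<and> w (j+1) < w (j+2))
       + of_bool (w (j+1) < w j \<and> w j < w (j+2)) + (of_bool (w (j+2) < w j \<and> w j < w (j+1)) :: int)"
      by (rule three_orders[OF d, symmetric])
  qed
  also have "\<dots> = int (E (\<lambda>x y z. z < y \<and> y < x)) + E (\<lambda>x y z. y < z \<and> z < x) + E (\<lambda>x y z. x < z \<and> z < y)
     + E (\<lambda>x y z. x < y \<and> y < z) + E (\<lambda>x y z. y < x \<and> x < z) + E (\<lambda>x y z. z < x \<and> x < y)"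
    unfolding E_def by (simp only: sum.distrib card_as_sum[OF fin])
  finally have "card W = 6 * E (\<lambda>x y z. z < y \<and> y < x)" using c2 c3 c4 c5 c6 by linarith
  thus ?thesis unfolding E_def by (simp add: conj_commute)
qed

lemma finite_fix_outside:
  assumes "finite P"
  shows "finite {w :: int \<Rightarrow> int. (\<forall>x. x \<notin> P \<longrightarrow> w x = x) \<and> (\<forall>x\<in>P. w x \<in> P)}"
proof -
  let ?S = "{w :: int \<Rightarrow> int. (\<forall>x. x \<notin> P \<longrightarrow> w x = x) \<and> (\<forall>x\<in>P. w x \<in> P)}"
  have "inj_on (\<lambda>w. restrict w P) ?S"
  proof (rule inj_onI)
    fix v w assume "v \<in> ?S" "w \<in> ?S" "restrict v P = restrict w P"
    thus "v = w" by (auto simp: fun_eq_iff restrict_def) metis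
  qed
  moreover have "(\<lambda>w. restrict w P) ` ?S \<subseteq> P \<rightarrow>\<^sub>E P" by auto
  moreover have "finite (P \<rightarrow>\<^sub>E P)" using assms by (simp add: finite_PiE)
  ultimately show ?thesis by (meson finite_imageD finite_subset)
qed

locale coxfinal = lenchar W g I C M k
  for W :: "(int \<Rightarrow> int) set" and g :: "int \<Rightarrow> int \<Rightarrow> int" and I :: "int set"
    and C :: "int \<Rightarrow> (int \<Rightarrow> int) \<Rightarrow> bool" and M k +
  fixes A :: "int set"
  assumes finW: "finite W"
    and farinv: "\<And>w i j. w \<in> W \<Longrightarrow> i \<in> I \<Longrightarrow> j \<in> I \<Longrightarrow> far i j \<Longrightarrow> C j (w \<circ> g i) \<longleftrightarrow> C j w"
    and AI: "A \<subseteq> I"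
    and Atrip: "\<And>i. i \<in> A \<Longrightarrow> i - 1 \<in> I \<and> i + 1 \<in> I"
    and Afar: "\<And>i j. i \<in> A \<Longrightarrow> j \<in> I \<Longrightarrow> j \<notin> {i - 1, i, i + 1} \<Longrightarrow> far i j"
    and Apair: "\<And>i j. i \<in> A \<Longrightarrow> j \<in> A \<Longrightarrow> i \<noteq> j \<Longrightarrow> far i j"
    and p16a: "\<And>i. i \<in> A \<Longrightarrow> 6 * card {w\<in>W. C (i - 1) w \<and> C i w} = card W"
    and p16b: "\<And>i. i \<in> A \<Longrightarrow> 6 * card {w\<in>W. C i w \<and> C (i + 1) w} = card W"
begin

lemma inv_inv_W: "w \<in> W \<Longrightarrow> inv (inv w) = w"
  using genW gen_bij inv_inv_eq by blast

lemma Dpdist: "(\<Sum>w\<in>W. h (des S (inv w))) = (\<Sum>w\<in>W. h (card {i\<in>I. C i w}))"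
proof -
  have "(\<Sum>w\<in>W. h (des S (inv w))) = (\<Sum>w\<in>W. h (card {i\<in>I. C i (inv w)}))"
    by (intro sum.cong refl) (simp add: des_eq invW)
  also have "\<dots> = (\<Sum>w\<in>W. h (card {i\<in>I. C i w}))"
    by (rule sum.reindex_bij_witness[of _ inv inv]) (auto simp: invW inv_inv_W)
  finally show ?thesis .
qed

sublocale mom: momsetup W g I C "\<lambda>w. des S (inv w)" A
proof
  show "finite W" by (rule finW)
  show "W \<noteq> {}" using idW by blast
  show "finite I" by (rule finI)
qed (auto simp: cl ginv C_flip farinv desinv_mono Dpdist AI Atrip Afar Apair p16a p16b)

lemma tstat_eq: "w \<in> W \<Longrightarrow> real (tstat S w) = mom.T w"
  unfolding tstat_def mom.T_def mom.D_def by (simp add: des_eq)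

lemma mean_eq: "(\<Sum>w\<in>W. real (tstat S w)) / card W = card I"
proof -
  have "(\<Sum>w\<in>W. real (tstat S w)) = (\<Sum>w\<in>W. mom.T w)" by (intro sum.cong) (auto simp: tstat_eq)
  also have "\<dots> = card I * card W" by (rule mom.sumT)
  finally show ?thesis using finW idW by (auto simp: card_gt_0_iff)
qed

lemma mom4_eq: "(\<Sum>w\<in>W. (real (tstat S w) - card I) ^ 4) = (\<Sum>w\<in>W. mom.U w ^ 4)"
  by (intro sum.cong) (auto simp: tstat_eq mom.U_def)

lemma final_bounds:
  "(card A)^2 / 1296 \<le> (\<Sum>w\<in>W. (real (tstat S w) - card I) ^ 4) / card W"
  "(\<Sum>w\<in>W. (real (tstat S w) - card I) ^ 4) / card W \<le> 243 * (card I)^2"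
proof -
  have Npos: "real (card W) > 0" using finW idW by (auto simp: card_gt_0_iff)
  show "(card A)^2 / 1296 \<le> (\<Sum>w\<in>W. (real (tstat S w) - card I) ^ 4) / card W"
    using mom.lower Npos unfolding mom4_eq by (simp add: field_simps)
  show "(\<Sum>w\<in>W. (real (tstat S w) - card I) ^ 4) / card W \<le> 243 * (card I)^2"
    using mom.upper Npos unfolding mom4_eq by (simp add: field_simps)
qed

end

lemma bij_betw_transp: "a \<in> P \<Longrightarrow> b \<in> P \<Longrightarrow> bij_betw (transp a b) P P"
  by (rule bij_betw_byWitness[of _ "transp a b"]) (auto simp: transp_def)

lemma incr_fix:
  fixes f :: "int \<Rightarrow> int" and N :: int
  assumes inc: "\<And>i. 1 \<le> i \<Longrightarrow> i < N \<Longrightarrow> f i < f (i+1)"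
    and rng1: "1 \<le> f 1" and rngN: "f N \<le> N"
    and p: "1 \<le> p" "p \<le> N"
  shows "f p = p"
proof -
  have lo: "1 + int k \<le> N \<longrightarrow> 1 + int k \<le> f (1 + int k)" for k
  proof (induction k)
    case 0 thus ?case using rng1 by simp
  next
    case (Suc k)
    show ?case
    proof
      assume h: "1 + int (Suc k) \<le> N"
      have "f (1 + int k) < f (1 + int k + 1)" using inc[of "1 + int k"] h by simp
      thus "1 + int (Suc k) \<le> f (1 + int (Suc k))" using Suc h by (simp add: add.commute add.left_commute)
    qed
  qed
  have hi: "1 \<le> N - int k \<longrightarrow> f (N - int k) \<le> N - int k" for k
  proof (induction k)
    case 0 thus ?case using rngN by simp
  next
    case (Suc k)
    show ?case
    proof
      assume h: "1 \<le> N - int (Suc k)"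
      have "f (N - int (Suc k)) < f (N - int (Suc k) + 1)" using inc[of "N - int (Suc k)"] h by simp
      moreover have "N - int (Suc k) + 1 = N - int k" by simp
      ultimately show "f (N - int (Suc k)) \<le> N - int (Suc k)" using Suc h by simp
    qed
  qed
  have "1 \<le> f p" "p \<le> f p" using lo[of "nat (p - 1)"] p by simp_all
  moreover have "f p \<le> p" using hi[of "nat (N - p)"] p by simp
  ultimately show ?thesis by simp
qed

definition gA :: "int \<Rightarrow> int \<Rightarrow> int" where "gA i = transp i (i + 1)"
definition CA :: "int \<Rightarrow> (int \<Rightarrow> int) \<Rightarrow> bool" where "CA i w = (w (i + 1) < w i)"
definition MA :: "nat \<Rightarrow> (int \<Rightarrow> int) \<Rightarrow> nat" where "MA n w = invc {1..int n + 1} w"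

lemma WA_iff: "w \<in> coxW TypeA n \<longleftrightarrow> bij_betw w {1..int n + 1} {1..int n + 1} \<and> (\<forall>x. x \<notin> {1..int n + 1} \<longrightarrow> w x = x)"
  by (simp add: coxW_def)

lemma A_id: "id \<in> coxW TypeA n"
  by (simp add: WA_iff)

lemma A_cl: "w \<in> coxW TypeA n \<Longrightarrow> i \<in> {1..int n} \<Longrightarrow> w \<circ> gA i \<in> coxW TypeA n"
proof -
  assume w: "w \<in> coxW TypeA n" and i: "i \<in> {1..int n}"
  have "bij_betw (gA i) {1..int n + 1} {1..int n + 1}" unfolding gA_def using i by (intro bij_betw_transp) auto
  hence "bij_betw (w \<circ> gA i) {1..int n + 1} {1..int n + 1}" using w WA_iff bij_betw_trans by blast
  moreover have "\<forall>x. x \<notin> {1..int n + 1} \<longrightarrow> (w \<circ> gA i) x = x"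
    using w i unfolding WA_iff gA_def transp_def by auto
  ultimately show ?thesis by (simp add: WA_iff)
qed

lemma A_step:
  assumes w: "w \<in> coxW TypeA n" and i: "i \<in> {1..int n}"
  shows "int (MA n (w \<circ> gA i)) = int (MA n w) - of_bool (CA i w) + of_bool (w i < w (i+1))"
proof -
  let ?P = "{1..int n + 1}"
  have K: "{(i, i+1), (i+1, i)} \<subseteq> ?P \<times> ?P" using i by auto
  have "int (invc ?P (w \<circ> transp i (i+1))) = int (invc ?P w) +
     (\<Sum>(p,q)\<in>{(i, i+1), (i+1, i)}. of_bool (transp i (i+1) p < transp i (i+1) q \<and> w q < w p) - of_bool (p < q \<and> w q < w p))"
    by (rule invc_diff[OF _ _ _ K]) (use i in \<open>auto simp: transp_def\<close>)
  thus ?thesis unfolding MA_def gA_def CA_def by (simp add: transp_def)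
qed

lemma A_inj: "w \<in> coxW TypeA n \<Longrightarrow> i \<in> {1..int n} \<Longrightarrow> w i \<noteq> w (i+1)"
  unfolding WA_iff bij_betw_def inj_on_def by force

lemma A_exdes:
  assumes w: "w \<in> coxW TypeA n" and nid: "w \<noteq> id"
  shows "\<exists>i\<in>{1..int n}. CA i w"
proof (rule ccontr)
  assume "\<not> ?thesis"
  hence inc: "\<And>i. 1 \<le> i \<Longrightarrow> i < int n + 1 \<Longrightarrow> w i < w (i+1)"
    using A_inj[OF w] unfolding CA_def by force
  have rng: "\<And>p. 1 \<le> p \<Longrightarrow> p \<le> int n + 1 \<Longrightarrow> 1 \<le> w p \<and> w p \<le> int n + 1"
    using w unfolding WA_iff bij_betw_def by auto
  have "w x = x" for x
  proof (cases "x \<in> {1..int n + 1}")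
    case True thus ?thesis using incr_fix[of "int n + 1" w x, OF inc] rng[of 1] rng[of "int n + 1"] by auto
  next
    case False thus ?thesis using w WA_iff by blast
  qed
  hence "w = id" by auto
  thus False using nid by simp
qed


context begin

lemma A_M0: "MA n id = 0"
proof -
  have "{(p,q) \<in> {1..int n + 1} \<times> {1..int n + 1}. p < q \<and> id q < id p} = {}" by auto
  thus ?thesis unfolding MA_def invc_def by (simp only: card.empty)
qed

lemma A_ginj: "inj_on gA I"
proof (rule inj_onI)
  fix i j assume "gA i = gA j"
  hence "gA i i = gA j i" by simp
  thus "i = j" unfolding gA_def transp_def by (auto split: if_splits)
qed

lemma A_lenchar: "lenchar (coxW TypeA n) gA {1..int n} CA (MA n) 1"
proof
  show "id \<in> coxW TypeA n" by (rule A_id)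
  show "\<And>w i. w \<in> coxW TypeA n \<Longrightarrow> i \<in> {1..int n} \<Longrightarrow> w \<circ> gA i \<in> coxW TypeA n" by (rule A_cl)
  show "MA n id = 0" by (rule A_M0)
  show "\<And>w i. w \<in> coxW TypeA n \<Longrightarrow> i \<in> {1..int n} \<Longrightarrow> CA i w \<Longrightarrow> MA n (w \<circ> gA i) + 1 = MA n w"
  proof -
    fix w i assume w: "w \<in> coxW TypeA n" and i: "i \<in> {1..int n}" and c: "CA i w"
    have "\<not> w i < w (i+1)" using c unfolding CA_def by simp
    thus "MA n (w \<circ> gA i) + 1 = MA n w" using A_step[OF w i] c by simp
  qed
  show "\<And>w i. w \<in> coxW TypeA n \<Longrightarrow> i \<in> {1..int n} \<Longrightarrow> \<not> CA i w \<Longrightarrow> MA n (w \<circ> gA i) = MA n w + 1"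
  proof -
    fix w i assume w: "w \<in> coxW TypeA n" and i: "i \<in> {1..int n}" and c: "\<not> CA i w"
    have "w i < w (i+1)" using c A_inj[OF w i] unfolding CA_def by simp
    thus "MA n (w \<circ> gA i) = MA n w + 1" using A_step[OF w i] c by simp
  qed
  show "\<And>w. w \<in> coxW TypeA n \<Longrightarrow> w \<noteq> id \<Longrightarrow> \<exists>i\<in>{1..int n}. CA i w" by (rule A_exdes)
  show "\<And>i. i \<in> {1..int n} \<Longrightarrow> gA i \<circ> gA i = id" unfolding gA_def by (rule transp_comp_invol)
  show "inj_on gA {1..int n}" by (rule A_ginj)
qed auto

end

definition Aset :: "nat \<Rightarrow> int set" where "Aset n = (\<lambda>t. 3 * t) ` {1..(int n - 2) div 3}"

lemma Aset_card: "card (Aset n) = nat ((int n - 2) div 3)"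
  unfolding Aset_def by (subst card_image) (auto simp: inj_on_def)

lemma Aset_mem: "i \<in> Aset n \<Longrightarrow> 3 \<le> i \<and> i \<le> int n - 2 \<and> 3 dvd i"
  unfolding Aset_def by auto

lemma Aset_pair: "i \<in> Aset n \<Longrightarrow> j \<in> Aset n \<Longrightarrow> i \<noteq> j \<Longrightarrow> far i j"
  unfolding Aset_def far_def by auto

lemma Aset_far: "i \<in> Aset n \<Longrightarrow> j \<notin> {i - 1, i, i + 1} \<Longrightarrow> far i j"
  using Aset_mem[of i n] unfolding far_def by auto

lemma Aset_big: "n \<ge> 16 \<Longrightarrow> real n / 4 \<le> real (card (Aset n))"
  unfolding Aset_card by linarith

lemma A_W_finite: "finite (coxW TypeA n)"
proof (rule finite_subset[OF _ finite_fix_outside[of "{1..int n + 1}"]])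
  show "coxW TypeA n \<subseteq> {w. (\<forall>x. x \<notin> {1..int n + 1} \<longrightarrow> w x = x) \<and> (\<forall>x\<in>{1..int n + 1}. w x \<in> {1..int n + 1})}"
  proof
    fix w assume "w \<in> coxW TypeA n"
    thus "w \<in> {w. (\<forall>x. x \<notin> {1..int n + 1} \<longrightarrow> w x = x) \<and> (\<forall>x\<in>{1..int n + 1}. w x \<in> {1..int n + 1})}"
      unfolding WA_iff bij_betw_def by auto
  qed
qed simp

lemma A_coxfinal: "coxfinal (coxW TypeA n) gA {1..int n} CA (MA n) 1 (Aset n)"
proof -
  interpret lenchar "coxW TypeA n" gA "{1..int n}" CA "MA n" 1 by (rule A_lenchar)
  have injW: "\<And>w. w \<in> coxW TypeA n \<Longrightarrow> inj w" using genW gen_bij bij_is_inj by blast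
  have p16: "6 * card {w \<in> coxW TypeA n. CA j w \<and> CA (j+1) w} = card (coxW TypeA n)"
    if j: "j \<in> {1..int n}" "j + 1 \<in> {1..int n}" for j
  proof -
    have "6 * card {w \<in> coxW TypeA n. w (j+1) < w j \<and> w (j+2) < w (j+1)} = card (coxW TypeA n)"
    proof -
      have cla: "\<And>w. w \<in> coxW TypeA n \<Longrightarrow> w \<circ> gA j \<in> coxW TypeA n" using A_cl j by blast
      have clb: "\<And>w. w \<in> coxW TypeA n \<Longrightarrow> w \<circ> gA (j+1) \<in> coxW TypeA n" using A_cl j by blast
      show ?thesis by (rule six_orders[OF A_W_finite cla clb]) (auto simp: gA_def transp_def injW)
    qed
    thus ?thesis unfolding CA_def by (simp add: add.assoc)
  qed
  show ?thesis
  proof (unfold_locales)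
    show "finite (coxW TypeA n)" by (rule A_W_finite)
    show "\<And>w i j. w \<in> coxW TypeA n \<Longrightarrow> i \<in> {1..int n} \<Longrightarrow> j \<in> {1..int n} \<Longrightarrow> far i j \<Longrightarrow> CA j (w \<circ> gA i) = CA j w"
      unfolding CA_def gA_def far_def transp_def by auto
    show "Aset n \<subseteq> {1..int n}" using Aset_mem by force
    show "\<And>i. i \<in> Aset n \<Longrightarrow> i - 1 \<in> {1..int n} \<and> i + 1 \<in> {1..int n}" using Aset_mem by force
    show "\<And>i j. i \<in> Aset n \<Longrightarrow> j \<in> {1..int n} \<Longrightarrow> j \<notin> {i - 1, i, i + 1} \<Longrightarrow> far i j" using Aset_far by blast
    show "\<And>i j. i \<in> Aset n \<Longrightarrow> j \<in> Aset n \<Longrightarrow> i \<noteq> j \<Longrightarrow> far i j" by (rule Aset_pair)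
    show "\<And>i. i \<in> Aset n \<Longrightarrow> 6 * card {w \<in> coxW TypeA n. CA (i - 1) w \<and> CA i w} = card (coxW TypeA n)"
    proof -
      fix i assume i: "i \<in> Aset n"
      show "6 * card {w \<in> coxW TypeA n. CA (i - 1) w \<and> CA i w} = card (coxW TypeA n)"
        using p16[of "i - 1"] Aset_mem[OF i] by simp
    qed
    show "\<And>i. i \<in> Aset n \<Longrightarrow> 6 * card {w \<in> coxW TypeA n. CA i w \<and> CA (i + 1) w} = card (coxW TypeA n)"
    proof -
      fix i assume i: "i \<in> Aset n"
      show "6 * card {w \<in> coxW TypeA n. CA i w \<and> CA (i + 1) w} = card (coxW TypeA n)"
        using p16[of i] Aset_mem[OF i] by simp
    qed
  qed
qed

lemma final_from_coxfinal:
  assumes cf: "coxfinal (coxW F n) g I C M k A" and S: "coxS F n = g ` I" and cI: "card I = n"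
    and cA: "real n / 4 \<le> real (card A)"
  shows "real n ^ 2 / 20736 \<le> T_moment4 F n \<and> T_moment4 F n \<le> 243 * real n ^ 2"
proof -
  interpret coxfinal "coxW F n" g I C M k A by (rule cf)
  have mean: "T_mean F n = card I" unfolding T_mean_def S by (rule mean_eq)
  have m4: "T_moment4 F n = (\<Sum>w\<in>coxW F n. (real (tstat S w) - card I) ^ 4) / card (coxW F n)"
    unfolding T_moment4_def mean S ..
  have "real n ^ 2 / 20736 \<le> (real (card A))^2 / 1296"
  proof -
    have "(real n / 4)^2 \<le> (real (card A))^2" using cA by (intro power_mono) auto
    thus ?thesis by (simp add: power_divide)
  qed
  have "real n ^ 2 / 20736 \<le> (\<Sum>w\<in>coxW F n. (real (tstat S w) - card I) ^ 4) / card (coxW F n)"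
  proof -
    have "(real (card A))^2 / 1296 \<le> (\<Sum>w\<in>coxW F n. (real (tstat S w) - card I) ^ 4) / card (coxW F n)"
      using final_bounds(1) by (simp add: of_nat_power)
    thus ?thesis using \<open>real n ^ 2 / 20736 \<le> (real (card A))^2 / 1296\<close> by linarith
  qed
  moreover have "(\<Sum>w\<in>coxW F n. (real (tstat S w) - card I) ^ 4) / card (coxW F n) \<le> 243 * real n ^ 2"
    using final_bounds(2) cI by simp
  ultimately show ?thesis unfolding m4 by simp
qed

lemma typeA_bounds: "n \<ge> 16 \<Longrightarrow> real n ^ 2 / 20736 \<le> T_moment4 TypeA n \<and> T_moment4 TypeA n \<le> 243 * real n ^ 2"
proof (rule final_from_coxfinal[OF A_coxfinal])
  show "coxS TypeA n = gA ` {1..int n}" unfolding coxS_def gA_def by auto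
  show "card {1..int n} = n" by simp
  show "n \<ge> 16 \<Longrightarrow> real n / 4 \<le> real (card (Aset n))" by (rule Aset_big)
qed

definition Pn :: "nat \<Rightarrow> int set" where "Pn n = {- int n..int n} - {0}"
definition negc :: "nat \<Rightarrow> (int \<Rightarrow> int) \<Rightarrow> nat" where "negc n w = card {i \<in> {1..int n}. w i < 0}"
definition gS :: "int \<Rightarrow> int \<Rightarrow> int" where "gS i = transp i (i + 1) \<circ> transp (- i) (- (i + 1))"
definition g0B :: "int \<Rightarrow> int" where "g0B = transp 1 (-1)"
definition g0D :: "int \<Rightarrow> int" where "g0D = transp 1 (-2) \<circ> transp (-1) 2"

lemma fin_Pn: "finite (Pn n)" by (simp add: Pn_def)

lemma sp_odd: "w \<in> signed_perms n \<Longrightarrow> w (- x) = - w x"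
  by (simp add: signed_perms_def)
lemma sp_bij: "w \<in> signed_perms n \<Longrightarrow> bij w"
  by (simp add: signed_perms_def)
lemma sp_out: "w \<in> signed_perms n \<Longrightarrow> x \<notin> {- int n..int n} \<Longrightarrow> w x = x"
  by (simp add: signed_perms_def)
lemma sp_zero: "w \<in> signed_perms n \<Longrightarrow> w 0 = 0"
  using sp_odd[of w n 0] by simp
lemma sp_inj: "w \<in> signed_perms n \<Longrightarrow> w x = w y \<longleftrightarrow> x = y"
  using sp_bij bij_is_inj inj_eq by metis
lemma sp_range: "w \<in> signed_perms n \<Longrightarrow> x \<in> {- int n..int n} \<Longrightarrow> w x \<in> {- int n..int n}"
proof (rule ccontr)
  assume w: "w \<in> signed_perms n" and x: "x \<in> {- int n..int n}" and nx: "w x \<notin> {- int n..int n}"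
  have "w (w x) = w x" using sp_out[OF w nx] .
  hence "w x = x" using sp_inj[OF w] by simp
  thus False using x nx by simp
qed
lemma sp_Pn: "w \<in> signed_perms n \<Longrightarrow> x \<in> Pn n \<Longrightarrow> w x \<in> Pn n"
  using sp_range[of w n x] sp_inj[of w n x 0] sp_zero[of w n] unfolding Pn_def by auto
lemma sp_pos: "w \<in> signed_perms n \<Longrightarrow> 1 \<le> x \<Longrightarrow> x \<le> int n \<Longrightarrow> w x \<noteq> 0 \<and> - int n \<le> w x \<and> w x \<le> int n"
  using sp_Pn[of w n x] unfolding Pn_def by auto
lemma sp_id: "id \<in> signed_perms n"
  by (simp add: signed_perms_def)

lemma sp_comp:
  assumes w: "w \<in> signed_perms n" and inv: "\<And>x. \<sigma> (\<sigma> x) = x" and odd: "\<And>x. \<sigma> (- x) = - \<sigma> x"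
    and out: "\<And>x. x \<notin> {- int n..int n} \<Longrightarrow> \<sigma> x = x"
  shows "w \<circ> \<sigma> \<in> signed_perms n"
proof -
  have "bij (w \<circ> \<sigma>)" using sp_bij[OF w] involuntory_imp_bij[of \<sigma>] inv by (blast intro: bij_comp)
  moreover have "\<forall>x. (w \<circ> \<sigma>) (- x) = - (w \<circ> \<sigma>) x" using odd sp_odd[OF w] by simp
  moreover have "\<forall>x. x \<notin> {- int n..int n} \<longrightarrow> (w \<circ> \<sigma>) x = x" using out sp_out[OF w] by simp
  ultimately show ?thesis unfolding signed_perms_def by blast
qed

lemma gS_inv: "1 \<le> i \<Longrightarrow> gS i (gS i x) = x" unfolding gS_def transp_def by auto
lemma gS_odd: "1 \<le> i \<Longrightarrow> gS i (- x) = - gS i x" unfolding gS_def transp_def by auto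
lemma gS_out: "1 \<le> i \<Longrightarrow> i + 1 \<le> int n \<Longrightarrow> x \<notin> {- int n..int n} \<Longrightarrow> gS i x = x"
  unfolding gS_def transp_def by auto
lemma gS_pos: "1 \<le> i \<Longrightarrow> 1 \<le> p \<Longrightarrow> gS i p = transp i (i + 1) p"
  unfolding gS_def transp_def by auto
lemma gS_comp_invol: "1 \<le> i \<Longrightarrow> gS i \<circ> gS i = id" using gS_inv by auto

lemma g0B_inv: "g0B (g0B x) = x" unfolding g0B_def transp_def by auto
lemma g0B_odd: "g0B (- x) = - g0B x" unfolding g0B_def transp_def by auto
lemma g0B_out: "1 \<le> n \<Longrightarrow> x \<notin> {- int n..int n} \<Longrightarrow> g0B x = x" unfolding g0B_def transp_def by auto
lemma g0B_pos: "2 \<le> p \<Longrightarrow> g0B p = p" unfolding g0B_def transp_def by auto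

lemma g0D_inv: "g0D (g0D x) = x" unfolding g0D_def transp_def by auto
lemma g0D_odd: "g0D (- x) = - g0D x" unfolding g0D_def transp_def by auto
lemma g0D_out: "2 \<le> n \<Longrightarrow> x \<notin> {- int n..int n} \<Longrightarrow> g0D x = x" unfolding g0D_def transp_def by auto
lemma g0D_pos: "3 \<le> p \<Longrightarrow> g0D p = p" unfolding g0D_def transp_def by auto

lemma Pn_mem: "x \<in> Pn n \<longleftrightarrow> x \<noteq> 0 \<and> - int n \<le> x \<and> x \<le> int n" unfolding Pn_def by auto

lemma negc_sum: "int (negc n w) = (\<Sum>p\<in>{1..int n}. of_bool (w p < 0))"
  unfolding negc_def by (rule card_as_sum) simp

lemma gS_invc:
  assumes w: "w \<in> signed_perms n" and i: "1 \<le> i" "i + 1 \<le> int n"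
  shows "int (invc (Pn n) (w \<circ> gS i)) = int (invc (Pn n) w) + 2 * (of_bool (w i < w (i+1)) - of_bool (w (i+1) < w i))"
proof -
  have K: "{(i, i+1), (i+1, i), (-(i+1), -i), (-i, -(i+1))} \<subseteq> Pn n \<times> Pn n" using i by (auto simp: Pn_mem)
  have "int (invc (Pn n) (w \<circ> gS i)) = int (invc (Pn n) w) +
     (\<Sum>(p,q)\<in>{(i, i+1), (i+1, i), (-(i+1), -i), (-i, -(i+1))}. of_bool (gS i p < gS i q \<and> w q < w p) - of_bool (p < q \<and> w q < w p))"
  proof (rule invc_diff[OF fin_Pn _ _ K])
    show "\<And>x. x \<in> Pn n \<Longrightarrow> gS i x \<in> Pn n" using i unfolding Pn_mem gS_def transp_def by auto
    show "\<And>x. gS i (gS i x) = x" using gS_inv i by blast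
    show "\<And>p q. p \<in> Pn n \<Longrightarrow> q \<in> Pn n \<Longrightarrow> (p, q) \<notin> {(i, i+1), (i+1, i), (-(i+1), -i), (-i, -(i+1))} \<Longrightarrow>
          (gS i p < gS i q) = (p < q)"
      using i unfolding gS_def transp_def by auto
  qed
  also have "\<dots> = int (invc (Pn n) w) + 2 * (of_bool (w i < w (i+1)) - of_bool (w (i+1) < w i))"
  proof -
    have o: "w (- i - 1) = - w (i+1)" "w (- i) = - w i" using sp_odd[OF w, of "i+1"] sp_odd[OF w, of i] by simp_all
    have d: "w i \<noteq> w (i+1)" using sp_inj[OF w, of i "i+1"] by simp
    show ?thesis using i d by (simp add: gS_def transp_def o) linarith?
  qed
  finally show ?thesis by linarith
qed

lemma gS_negc:
  assumes w: "w \<in> signed_perms n" and i: "1 \<le> i" "i + 1 \<le> int n"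
  shows "negc n (w \<circ> gS i) = negc n w"
  unfolding negc_def
proof (rule bij_betw_same_card[of "gS i"], rule bij_betw_byWitness[of _ "gS i"])
  show "\<forall>a\<in>{p \<in> {1..int n}. (w \<circ> gS i) p < 0}. gS i (gS i a) = a" using gS_inv i by blast
  show "\<forall>a\<in>{p \<in> {1..int n}. w p < 0}. gS i (gS i a) = a" using gS_inv i by blast
  show "gS i ` {p \<in> {1..int n}. (w \<circ> gS i) p < 0} \<subseteq> {p \<in> {1..int n}. w p < 0}"
    using i unfolding gS_def transp_def by auto
  show "gS i ` {p \<in> {1..int n}. w p < 0} \<subseteq> {p \<in> {1..int n}. (w \<circ> gS i) p < 0}"
  proof
    fix x assume "x \<in> gS i ` {p \<in> {1..int n}. w p < 0}"
    then obtain p where p: "p \<in> {1..int n}" "w p < 0" "x = gS i p" by auto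
    have "gS i x = p" using p gS_inv i by simp
    moreover have "x \<in> {1..int n}" using p i unfolding gS_def transp_def by auto
    ultimately show "x \<in> {p \<in> {1..int n}. (w \<circ> gS i) p < 0}" using p by simp
  qed
qed

lemma g0B_invc:
  assumes w: "w \<in> signed_perms n" and n: "1 \<le> n"
  shows "int (invc (Pn n) (w \<circ> g0B)) = int (invc (Pn n) w) + (of_bool (0 < w 1) - of_bool (w 1 < 0))"
proof -
  have K: "{(1, -1), (-1, 1)} \<subseteq> Pn n \<times> Pn n" using n by (auto simp: Pn_mem)
  have "int (invc (Pn n) (w \<circ> g0B)) = int (invc (Pn n) w) +
     (\<Sum>(p,q)\<in>{(1, -1), (-1, 1)}. of_bool (g0B p < g0B q \<and> w q < w p) - of_bool (p < q \<and> w q < w p))"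
  proof (rule invc_diff[OF fin_Pn _ _ K])
    show "\<And>x. x \<in> Pn n \<Longrightarrow> g0B x \<in> Pn n" using n unfolding Pn_mem g0B_def transp_def by auto
    show "\<And>x. g0B (g0B x) = x" by (rule g0B_inv)
    show "\<And>p q. p \<in> Pn n \<Longrightarrow> q \<in> Pn n \<Longrightarrow> (p, q) \<notin> {(1, -1), (-1, 1)} \<Longrightarrow> (g0B p < g0B q) = (p < q)"
      unfolding g0B_def transp_def Pn_mem by auto
  qed
  also have "\<dots> = int (invc (Pn n) w) + (of_bool (0 < w 1) - of_bool (w 1 < 0))"
    using sp_odd[OF w, of 1] by (simp add: g0B_def transp_def)
  finally show ?thesis .
qed

lemma g0B_negc:
  assumes w: "w \<in> signed_perms n" and n: "1 \<le> n"
  shows "int (negc n (w \<circ> g0B)) = int (negc n w) + (of_bool (0 < w 1) - of_bool (w 1 < 0))"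
proof -
  have e: "{1..int n} = insert 1 {2..int n}" using n by auto
  have "(\<Sum>p\<in>{2..int n}. of_bool ((w \<circ> g0B) p < 0)) = (\<Sum>p\<in>{2..int n}. (of_bool (w p < 0) :: int))"
    by (intro sum.cong) (auto simp: g0B_pos)
  moreover have "(w \<circ> g0B) 1 = - w 1" using sp_odd[OF w, of 1] by (simp add: g0B_def transp_def)
  ultimately show ?thesis unfolding negc_sum e by simp
qed

lemma g0D_vals: "g0D (-2) = 1" "g0D (-1) = 2" "g0D 1 = -2" "g0D 2 = -1"
  "x \<notin> {-2, -1, 1, 2} \<Longrightarrow> g0D x = x"
  unfolding g0D_def transp_def by auto

lemma g0D_off:
  assumes p: "p \<noteq> 0" and q: "q \<noteq> 0"
    and K: "(p, q) \<notin> {(-2, 1), (1, -2), (-2, 2), (2, -2), (-1, 1), (1, -1), (-1, 2), (2, -1)}"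
  shows "(g0D p < g0D q) = (p < q)"
proof (cases "p \<in> {-2, -1, 1, 2}")
  case pin: True
  show ?thesis
  proof (cases "q \<in> {-2, -1, 1, 2}")
    case True thus ?thesis using pin K by (auto simp: g0D_vals)
  next
    case False
    hence "q \<le> -3 \<or> 3 \<le> q" using q by auto
    thus ?thesis using pin False by (auto simp: g0D_vals)
  qed
next
  case pout: False
  hence pp: "p \<le> -3 \<or> 3 \<le> p" using p by auto
  show ?thesis
  proof (cases "q \<in> {-2, -1, 1, 2}")
    case True thus ?thesis using pout pp by (auto simp: g0D_vals)
  next
    case False thus ?thesis using pout by (simp add: g0D_vals)
  qed
qed

lemma g0D_invc:
  assumes w: "w \<in> signed_perms n" and n: "2 \<le> n"
  shows "int (invc (Pn n) (w \<circ> g0D)) = int (invc (Pn n) w) + 2 * (of_bool (0 < w 1 + w 2) - of_bool (w 1 + w 2 < 0))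
     + (of_bool (0 < w 1) - of_bool (w 1 < 0)) + (of_bool (0 < w 2) - of_bool (w 2 < 0))"
proof -
  let ?K = "{(-2, 1), (1, -2), (-2, 2), (2, -2), (-1, 1), (1, -1), (-1, 2), (2, -1)}"
  have K: "?K \<subseteq> Pn n \<times> Pn n" using n by (auto simp: Pn_mem)
  have "int (invc (Pn n) (w \<circ> g0D)) = int (invc (Pn n) w) +
     (\<Sum>(p,q)\<in>?K. of_bool (g0D p < g0D q \<and> w q < w p) - of_bool (p < q \<and> w q < w p))"
  proof (rule invc_diff[OF fin_Pn _ _ K])
    show "\<And>x. x \<in> Pn n \<Longrightarrow> g0D x \<in> Pn n" using n unfolding Pn_mem g0D_def transp_def by auto
    show "\<And>x. g0D (g0D x) = x" by (rule g0D_inv)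
    show "\<And>p q. p \<in> Pn n \<Longrightarrow> q \<in> Pn n \<Longrightarrow> (p, q) \<notin> ?K \<Longrightarrow> (g0D p < g0D q) = (p < q)"
      using g0D_off unfolding Pn_mem by blast
  qed
  also have "(\<Sum>(p,q)\<in>?K. of_bool (g0D p < g0D q \<and> w q < w p) - of_bool (p < q \<and> w q < w p))
     = 2 * (of_bool (0 < w 1 + w 2) - of_bool (w 1 + w 2 < 0))
     + (of_bool (0 < w 1) - of_bool (w 1 < 0)) + (of_bool (0 < w 2) - (of_bool (w 2 < 0) :: int))"
  proof -
    have o: "w (-1) = - w 1" "w (-2) = - w 2" using sp_odd[OF w, of 1] sp_odd[OF w, of 2] by simp_all
    show ?thesis by (simp add: g0D_vals o) linarith?
  qed
  finally show ?thesis by linarith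
qed

lemma g0D_negc:
  assumes w: "w \<in> signed_perms n" and n: "2 \<le> n"
  shows "int (negc n (w \<circ> g0D)) = int (negc n w) + (of_bool (0 < w 1) - of_bool (w 1 < 0)) + (of_bool (0 < w 2) - of_bool (w 2 < 0))"
proof -
  have e: "{1..int n} = insert 1 (insert 2 {3..int n})" using n by auto
  have "(\<Sum>p\<in>{3..int n}. of_bool ((w \<circ> g0D) p < 0)) = (\<Sum>p\<in>{3..int n}. (of_bool (w p < 0) :: int))"
    by (intro sum.cong) (auto simp: g0D_pos)
  moreover have "(w \<circ> g0D) 1 = - w 2" "(w \<circ> g0D) 2 = - w 1"
    using sp_odd[OF w, of 1] sp_odd[OF w, of 2] by (simp_all add: g0D_def transp_def)
  ultimately show ?thesis unfolding negc_sum e by simp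
qed

lemma chain_mono:
  fixes f :: "int \<Rightarrow> int"
  assumes inc: "\<And>i. a \<le> i \<Longrightarrow> i < b \<Longrightarrow> f i < f (i+1)" and p: "a \<le> p" "p \<le> b"
  shows "f a \<le> f p"
proof -
  have "a + int k \<le> b \<longrightarrow> f a \<le> f (a + int k)" for k
  proof (induction k)
    case 0 show ?case by simp
  next
    case (Suc k)
    show ?case
    proof
      assume h: "a + int (Suc k) \<le> b"
      have e: "a + int (Suc k) = a + int k + 1" by simp
      have "f (a + int k) < f (a + int k + 1)" using inc[of "a + int k"] h by simp
      moreover have "f a \<le> f (a + int k)" using Suc.IH h by simp
      ultimately show "f a \<le> f (a + int (Suc k))" unfolding e by simp
    qed
  qed
  from this[of "nat (p - a)"] p show ?thesis by simp
qed

lemma sp_id_from_pos: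
  assumes w: "w \<in> signed_perms n" and pos: "\<And>p. 1 \<le> p \<Longrightarrow> p \<le> int n \<Longrightarrow> w p = p"
  shows "w = id"
proof
  fix x
  show "w x = id x"
  proof (cases "x \<in> {- int n..int n}")
    case True
    consider "x = 0" | "1 \<le> x" | "x \<le> -1" by linarith
    thus ?thesis
    proof cases
      case 1 thus ?thesis using sp_zero[OF w] by simp
    next
      case 2 thus ?thesis using pos True by simp
    next
      case 3 thus ?thesis using pos[of "-x"] True sp_odd[OF w, of "-x"] by simp
    qed
  next
    case False thus ?thesis using sp_out[OF w] by simp
  qed
qed

definition gB :: "int \<Rightarrow> int \<Rightarrow> int" where "gB i = (if i = 0 then g0B else gS i)"
definition CB :: "int \<Rightarrow> (int \<Rightarrow> int) \<Rightarrow> bool" where "CB i w = (if i = 0 then w 1 < 0 else w (i+1) < w i)"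
definition MB :: "nat \<Rightarrow> (int \<Rightarrow> int) \<Rightarrow> nat" where "MB n w = invc (Pn n) w + negc n w"

lemma WB: "coxW TypeB n = signed_perms n" by (simp add: coxW_def)

lemma invc_id: "invc P id = 0"
proof -
  have "{(p,q) \<in> P \<times> P. p < q \<and> id q < id p} = {}" by auto
  thus ?thesis unfolding invc_def by (simp only: card.empty)
qed

lemma negc_id: "negc n id = 0"
proof -
  have "{i \<in> {1..int n}. id i < 0} = {}" by auto
  thus ?thesis unfolding negc_def by (simp only: card.empty)
qed

lemma B_cl:
  assumes n: "1 \<le> n" and w: "w \<in> signed_perms n" and i: "i \<in> {0..int n - 1}"
  shows "w \<circ> gB i \<in> signed_perms n"
proof (cases "i = 0")
  case True thus ?thesis unfolding gB_def using g0B_inv g0B_odd g0B_out[OF n] by (auto intro!: sp_comp[OF w])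
next
  case False
  hence i': "1 \<le> i" "i + 1 \<le> int n" using i by auto
  thus ?thesis unfolding gB_def using False gS_inv[OF i'(1)] gS_odd[OF i'(1)] gS_out[OF i'] by (auto intro!: sp_comp[OF w])
qed

lemma B_step:
  assumes n: "1 \<le> n" and w: "w \<in> signed_perms n" and i: "i \<in> {0..int n - 1}"
  shows "int (MB n (w \<circ> gB i)) = int (MB n w) + (if CB i w then -2 else 2)"
proof (cases "i = 0")
  case True
  have "w 1 \<noteq> 0" using sp_pos[OF w, of 1] n by simp
  thus ?thesis using True g0B_invc[OF w n] g0B_negc[OF w n] unfolding MB_def gB_def CB_def by auto
next
  case False
  hence i': "1 \<le> i" "i + 1 \<le> int n" using i by auto
  have "w i \<noteq> w (i+1)" using sp_inj[OF w, of i "i+1"] by simp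
  thus ?thesis using False gS_invc[OF w i'] gS_negc[OF w i'] unfolding MB_def gB_def CB_def by auto
qed

lemma B_exdes:
  assumes n: "1 \<le> n" and w: "w \<in> signed_perms n" and nid: "w \<noteq> id"
  shows "\<exists>i\<in>{0..int n - 1}. CB i w"
proof (rule ccontr)
  assume "\<not> ?thesis"
  hence nc: "\<And>i. i \<in> {0..int n - 1} \<Longrightarrow> \<not> CB i w" by blast
  have w1: "1 \<le> w 1" using nc[of 0] n sp_pos[OF w, of 1] unfolding CB_def by auto
  have inc: "\<And>i. 1 \<le> i \<Longrightarrow> i < int n \<Longrightarrow> w i < w (i+1)"
  proof -
    fix i :: int assume "1 \<le> i" "i < int n"
    hence "\<not> w (i+1) < w i" using nc[of i] unfolding CB_def by auto
    moreover have "w i \<noteq> w (i+1)" using sp_inj[OF w, of i "i+1"] by simp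
    ultimately show "w i < w (i+1)" by simp
  qed
  have "w (int n) \<le> int n" using sp_pos[OF w, of "int n"] n by simp
  hence "\<And>p. 1 \<le> p \<Longrightarrow> p \<le> int n \<Longrightarrow> w p = p" using incr_fix[of "int n" w, OF inc w1] by blast
  hence "w = id" using sp_id_from_pos[OF w] by blast
  thus False using nid by simp
qed

lemma B_ginj: "inj_on gB {0..int n - 1}"
proof (rule inj_onI)
  fix i j assume i: "i \<in> {0..int n - 1}" and j: "j \<in> {0..int n - 1}" and e: "gB i = gB j"
  have e1: "gB i 1 = gB j 1" and e2: "gB i i = gB j i" using e by simp_all
  show "i = j"
  proof (cases "i = 0 \<or> j = 0")
    case True thus ?thesis using e1 i j unfolding gB_def g0B_def gS_def transp_def by (auto split: if_splits)
  next
    case False thus ?thesis using e2 i j unfolding gB_def g0B_def gS_def transp_def by (auto split: if_splits)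
  qed
qed

lemma B_lenchar: "1 \<le> n \<Longrightarrow> lenchar (coxW TypeB n) gB {0..int n - 1} CB (MB n) 2"
proof
  assume n: "1 \<le> n"
  show "id \<in> coxW TypeB n" by (simp add: WB sp_id)
  show "\<And>w i. w \<in> coxW TypeB n \<Longrightarrow> i \<in> {0..int n - 1} \<Longrightarrow> w \<circ> gB i \<in> coxW TypeB n"
    using B_cl[OF n] by (simp add: WB)
  show "MB n id = 0" by (simp add: MB_def invc_id negc_id)
  show "\<And>w i. w \<in> coxW TypeB n \<Longrightarrow> i \<in> {0..int n - 1} \<Longrightarrow> CB i w \<Longrightarrow> MB n (w \<circ> gB i) + 2 = MB n w"
    using B_step[OF n] unfolding WB by fastforce
  show "\<And>w i. w \<in> coxW TypeB n \<Longrightarrow> i \<in> {0..int n - 1} \<Longrightarrow> \<not> CB i w \<Longrightarrow> MB n (w \<circ> gB i) = MB n w + 2"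
    using B_step[OF n] unfolding WB by fastforce
  show "\<And>w. w \<in> coxW TypeB n \<Longrightarrow> w \<noteq> id \<Longrightarrow> \<exists>i\<in>{0..int n - 1}. CB i w"
    using B_exdes[OF n] unfolding WB by blast
  show "\<And>i. i \<in> {0..int n - 1} \<Longrightarrow> gB i \<circ> gB i = id"
  proof -
    fix i :: int assume i: "i \<in> {0..int n - 1}"
    show "gB i \<circ> gB i = id"
    proof (cases "i = 0")
      case True thus ?thesis unfolding gB_def using g0B_inv by (auto simp: fun_eq_iff)
    next
      case False hence "1 \<le> i" using i by auto
      thus ?thesis unfolding gB_def using False gS_comp_invol by simp
    qed
  qed
  show "inj_on gB {0..int n - 1}" by (rule B_ginj)
qed auto

lemma sp_W_finite: "finite (signed_perms n)"
proof (rule finite_subset[OF _ finite_fix_outside[of "{- int n..int n}"]])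
  show "signed_perms n \<subseteq> {w. (\<forall>x. x \<notin> {- int n..int n} \<longrightarrow> w x = x) \<and> (\<forall>x\<in>{- int n..int n}. w x \<in> {- int n..int n})}"
    using sp_out sp_range by blast
qed simp

lemma B_far_fix:
  assumes i: "i \<in> {0..int n - 1}" and j: "j \<in> {0..int n - 1}" and f: "far i j"
  shows "(j = 0 \<longrightarrow> gB i 1 = 1) \<and> (j \<noteq> 0 \<longrightarrow> gB i j = j \<and> gB i (j+1) = j+1)"
proof (cases "i = 0")
  case True
  hence "3 \<le> j" using f j unfolding far_def by auto
  thus ?thesis using True unfolding gB_def by (simp add: g0B_pos)
next
  case False
  hence i1: "1 \<le> i" using i by auto
  show ?thesis
  proof (cases "j = 0")
    case True
    hence "3 \<le> i" using f i unfolding far_def by auto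
    thus ?thesis using False True unfolding gB_def by (simp add: gS_pos transp_def)
  next
    case jn: False
    hence "2 \<le> \<bar>i - j\<bar>" "1 \<le> j" using f j unfolding far_def by auto
    thus ?thesis using False jn i1 unfolding gB_def by (simp add: gS_pos transp_def) arith
  qed
qed

lemma B_coxfinal: "1 \<le> n \<Longrightarrow> coxfinal (coxW TypeB n) gB {0..int n - 1} CB (MB n) 2 (Aset n)"
proof -
  assume n: "1 \<le> n"
  interpret lenchar "coxW TypeB n" gB "{0..int n - 1}" CB "MB n" 2 by (rule B_lenchar[OF n])
  have injW: "\<And>w. w \<in> coxW TypeB n \<Longrightarrow> inj w" using genW gen_bij bij_is_inj by blast
  have p16: "6 * card {w \<in> coxW TypeB n. CB j w \<and> CB (j+1) w} = card (coxW TypeB n)"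
    if j: "1 \<le> j" "j + 2 \<le> int n" for j
  proof -
    have cla: "\<And>w. w \<in> coxW TypeB n \<Longrightarrow> w \<circ> gS j \<in> coxW TypeB n" using cl[of _ j] j unfolding gB_def by auto
    have clb: "\<And>w. w \<in> coxW TypeB n \<Longrightarrow> w \<circ> gS (j+1) \<in> coxW TypeB n" using cl[of _ "j+1"] j unfolding gB_def by auto
    have "6 * card {w \<in> coxW TypeB n. w (j+1) < w j \<and> w (j+2) < w (j+1)} = card (coxW TypeB n)"
      by (rule six_orders[OF _ cla clb]) (use j in \<open>auto simp: WB sp_W_finite gS_inv gS_pos transp_def injW\<close>)
    thus ?thesis using j unfolding CB_def by (simp add: add.assoc)
  qed
  show ?thesis
  proof (unfold_locales)
    show "finite (coxW TypeB n)" by (simp add: WB sp_W_finite)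
    show "\<And>w i j. w \<in> coxW TypeB n \<Longrightarrow> i \<in> {0..int n - 1} \<Longrightarrow> j \<in> {0..int n - 1} \<Longrightarrow> far i j \<Longrightarrow> CB j (w \<circ> gB i) = CB j w"
    proof -
      fix w i j assume w: "w \<in> coxW TypeB n" and i: "i \<in> {0..int n - 1}" and j: "j \<in> {0..int n - 1}" and f: "far i j"
      note h = B_far_fix[OF i j f]
      show "CB j (w \<circ> gB i) = CB j w" using h by (cases "j = 0") (simp_all add: CB_def)
    qed
    show "Aset n \<subseteq> {0..int n - 1}" using Aset_mem by force
    show "\<And>i. i \<in> Aset n \<Longrightarrow> i - 1 \<in> {0..int n - 1} \<and> i + 1 \<in> {0..int n - 1}" using Aset_mem by force
    show "\<And>i j. i \<in> Aset n \<Longrightarrow> j \<in> {0..int n - 1} \<Longrightarrow> j \<notin> {i - 1, i, i + 1} \<Longrightarrow> far i j" using Aset_far by blast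
    show "\<And>i j. i \<in> Aset n \<Longrightarrow> j \<in> Aset n \<Longrightarrow> i \<noteq> j \<Longrightarrow> far i j" by (rule Aset_pair)
    show "\<And>i. i \<in> Aset n \<Longrightarrow> 6 * card {w \<in> coxW TypeB n. CB (i - 1) w \<and> CB i w} = card (coxW TypeB n)"
    proof -
      fix i assume i: "i \<in> Aset n"
      show "6 * card {w \<in> coxW TypeB n. CB (i - 1) w \<and> CB i w} = card (coxW TypeB n)"
        using p16[of "i - 1"] Aset_mem[OF i] by simp
    qed
    show "\<And>i. i \<in> Aset n \<Longrightarrow> 6 * card {w \<in> coxW TypeB n. CB i w \<and> CB (i + 1) w} = card (coxW TypeB n)"
    proof -
      fix i assume i: "i \<in> Aset n"
      show "6 * card {w \<in> coxW TypeB n. CB i w \<and> CB (i + 1) w} = card (coxW TypeB n)"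
        using p16[of i] Aset_mem[OF i] by simp
    qed
  qed
qed

lemma typeB_bounds: "n \<ge> 16 \<Longrightarrow> real n ^ 2 / 20736 \<le> T_moment4 TypeB n \<and> T_moment4 TypeB n \<le> 243 * real n ^ 2"
proof (rule final_from_coxfinal[OF B_coxfinal])
  assume n: "n \<ge> 16"
  show "1 \<le> n" using n by simp
  show "coxS TypeB n = gB ` {0..int n - 1}"
  proof
    show "coxS TypeB n \<subseteq> gB ` {0..int n - 1}"
    proof
      fix s assume "s \<in> coxS TypeB n"
      then consider "s = transp 1 (-1)" | i where "s = transp i (i + 1) \<circ> transp (- i) (- (i + 1))" "1 \<le> i" "i \<le> int n - 1"
        unfolding coxS_def by auto
      thus "s \<in> gB ` {0..int n - 1}"
      proof cases
        case 1 thus ?thesis using n unfolding gB_def g0B_def by (intro image_eqI[of _ _ 0]) auto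
      next
        case (2 i) thus ?thesis unfolding gB_def gS_def by (intro image_eqI[of _ _ i]) auto
      qed
    qed
    show "gB ` {0..int n - 1} \<subseteq> coxS TypeB n"
      unfolding coxS_def gB_def g0B_def gS_def by auto
  qed
  show "card {0..int n - 1} = n" by simp
  show "real n / 4 \<le> real (card (Aset n))" using n by (rule Aset_big)
qed

definition gD :: "int \<Rightarrow> int \<Rightarrow> int" where "gD i = (if i = 0 then g0D else gS i)"
definition CD :: "int \<Rightarrow> (int \<Rightarrow> int) \<Rightarrow> bool" where "CD i w = (if i = 0 then w 1 + w 2 < 0 else w (i+1) < w i)"
definition MD :: "nat \<Rightarrow> (int \<Rightarrow> int) \<Rightarrow> nat" where "MD n w = invc (Pn n) w - negc n w"

lemma WD: "w \<in> coxW TypeD n \<longleftrightarrow> w \<in> signed_perms n \<and> even (negc n w)"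
  by (simp add: coxW_def negc_def)

lemma negc_le_invc:
  assumes w: "w \<in> signed_perms n"
  shows "negc n w \<le> invc (Pn n) w"
  unfolding negc_def invc_def
proof (rule card_inj_on_le[of "\<lambda>p. (-p, p)"])
  show "inj_on (\<lambda>p. (- p, p)) {i \<in> {1..int n}. w i < 0}" by (auto simp: inj_on_def)
  show "(\<lambda>p. (- p, p)) ` {i \<in> {1..int n}. w i < 0} \<subseteq> {(p, q) \<in> Pn n \<times> Pn n. p < q \<and> w q < w p}"
    using sp_odd[OF w] by (auto simp: Pn_mem)
  show "finite {(p, q) \<in> Pn n \<times> Pn n. p < q \<and> w q < w p}"
    by (rule finite_subset[of _ "Pn n \<times> Pn n"]) (auto simp: fin_Pn)
qed

lemma MD_int: "w \<in> signed_perms n \<Longrightarrow> int (MD n w) = int (invc (Pn n) w) - int (negc n w)"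
  using negc_le_invc[of w n] unfolding MD_def by simp

lemma sp_w12: "2 \<le> n \<Longrightarrow> w \<in> signed_perms n \<Longrightarrow> w 1 \<noteq> 0 \<and> w 2 \<noteq> 0 \<and> w 1 + w 2 \<noteq> 0"
proof -
  assume n: "2 \<le> n" and w: "w \<in> signed_perms n"
  have "w 1 \<noteq> 0" "w 2 \<noteq> 0" using sp_pos[OF w, of 1] sp_pos[OF w, of 2] n by auto
  moreover have "w 1 \<noteq> w (-2)" using sp_inj[OF w, of 1 "-2"] by simp
  ultimately show ?thesis using sp_odd[OF w, of 2] by auto
qed

lemma g0D_negc2:
  assumes w: "w \<in> signed_perms n" and n: "2 \<le> n"
  shows "int (negc n (w \<circ> g0D)) = int (negc n w) + 2 * (of_bool (0 < w 1) + of_bool (0 < w 2) - 1)"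
  using g0D_negc[OF w n] sp_w12[OF n w] by auto

lemma D_cl:
  assumes n: "2 \<le> n" and w: "w \<in> coxW TypeD n" and i: "i \<in> {0..int n - 1}"
  shows "w \<circ> gD i \<in> coxW TypeD n"
proof -
  have ws: "w \<in> signed_perms n" and ev: "even (negc n w)" using w WD by auto
  show ?thesis
  proof (cases "i = 0")
    case True
    have n1: "1 \<le> n" using n by simp
    have "w \<circ> g0D \<in> signed_perms n" using g0D_inv g0D_odd g0D_out[OF n] by (auto intro!: sp_comp[OF ws])
    moreover have "even (int (negc n (w \<circ> g0D)))" using g0D_negc2[OF ws n] ev by simp
    ultimately show ?thesis using True unfolding gD_def WD by simp
  next
    case False
    hence i': "1 \<le> i" "i + 1 \<le> int n" using i by auto
    have "w \<circ> gS i \<in> signed_perms n" using gS_inv[OF i'(1)] gS_odd[OF i'(1)] gS_out[OF i'] by (auto intro!: sp_comp[OF ws])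
    moreover have "even (negc n (w \<circ> gS i))" using gS_negc[OF ws i'] ev by simp
    ultimately show ?thesis using False unfolding gD_def WD by simp
  qed
qed

lemma D_step:
  assumes n: "2 \<le> n" and w: "w \<in> signed_perms n" and i: "i \<in> {0..int n - 1}"
  shows "int (MD n (w \<circ> gD i)) = int (MD n w) + (if CD i w then -2 else 2)"
proof (cases "i = 0")
  case True
  have ws: "w \<circ> g0D \<in> signed_perms n" using g0D_inv g0D_odd g0D_out[OF n] by (auto intro!: sp_comp[OF w])
  have "w 1 + w 2 \<noteq> 0" using sp_w12[OF n w] by simp
  thus ?thesis using True g0D_invc[OF w n] g0D_negc[OF w n] MD_int[OF w] MD_int[OF ws]
    unfolding gD_def CD_def by auto
next
  case False
  hence i': "1 \<le> i" "i + 1 \<le> int n" using i by auto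
  have ws: "w \<circ> gS i \<in> signed_perms n" using gS_inv[OF i'(1)] gS_odd[OF i'(1)] gS_out[OF i'] by (auto intro!: sp_comp[OF w])
  have "w i \<noteq> w (i+1)" using sp_inj[OF w, of i "i+1"] by simp
  thus ?thesis using False gS_invc[OF w i'] gS_negc[OF w i'] MD_int[OF w] MD_int[OF ws]
    unfolding gD_def CD_def by auto
qed

lemma D_exdes:
  assumes n: "2 \<le> n" and w: "w \<in> coxW TypeD n" and nid: "w \<noteq> id"
  shows "\<exists>i\<in>{0..int n - 1}. CD i w"
proof (rule ccontr)
  assume "\<not> ?thesis"
  hence nc: "\<And>i. i \<in> {0..int n - 1} \<Longrightarrow> \<not> CD i w" by blast
  have ws: "w \<in> signed_perms n" and ev: "even (negc n w)" using w WD by auto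
  have "\<not> CD 0 w" using nc n by simp
  hence "\<not> w 1 + w 2 < 0" unfolding CD_def by simp
  hence s: "0 < w 1 + w 2" using sp_w12[OF n ws] by linarith
  have inc: "\<And>i. 1 \<le> i \<Longrightarrow> i < int n \<Longrightarrow> w i < w (i+1)"
  proof -
    fix i :: int assume "1 \<le> i" "i < int n"
    hence "\<not> w (i+1) < w i" using nc[of i] unfolding CD_def by auto
    moreover have "w i \<noteq> w (i+1)" using sp_inj[OF ws, of i "i+1"] by simp
    ultimately show "w i < w (i+1)" by simp
  qed
  have w12: "w 1 < w 2" using inc[of 1] n by simp
  show False
  proof (cases "0 < w 1")
    case True
    have wn: "w (int n) \<le> int n" using sp_pos[OF ws, of "int n"] n by simp
    have w1: "1 \<le> w 1" using True by simp
    have "\<And>p. 1 \<le> p \<Longrightarrow> p \<le> int n \<Longrightarrow> w p = p" using incr_fix[of "int n" w, OF inc w1 wn] by blast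
    hence "w = id" using sp_id_from_pos[OF ws] by blast
    thus False using nid by simp
  next
    case False
    hence w1: "w 1 < 0" using sp_w12[OF n ws] by linarith
    have w2: "0 < w 2" using s w1 by simp
    have "{i \<in> {1..int n}. w i < 0} = {1}"
    proof (intro equalityI subsetI)
      fix p assume p: "p \<in> {i \<in> {1..int n}. w i < 0}"
      show "p \<in> {1}"
      proof (rule ccontr)
        assume "p \<notin> {1}"
        hence "2 \<le> p" "p \<le> int n" using p by auto
        hence "w 2 \<le> w p" using chain_mono[of 2 "int n" w p] inc by force
        thus False using p w2 by simp
      qed
    next
      fix p assume "p \<in> {1::int}" thus "p \<in> {i \<in> {1..int n}. w i < 0}" using w1 n by simp
    qed
    hence "negc n w = 1" unfolding negc_def by simp
    thus False using ev by simp
  qed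
qed

lemma D_ginj: "inj_on gD {0..int n - 1}"
proof (rule inj_onI)
  fix i j assume i: "i \<in> {0..int n - 1}" and j: "j \<in> {0..int n - 1}" and e: "gD i = gD j"
  have e1: "gD i 1 = gD j 1" and e2: "gD i i = gD j i" using e by simp_all
  show "i = j"
  proof (cases "i = 0 \<or> j = 0")
    case True thus ?thesis using e1 i j unfolding gD_def g0D_def gS_def transp_def by (auto split: if_splits)
  next
    case False thus ?thesis using e2 i j unfolding gD_def g0D_def gS_def transp_def by (auto split: if_splits)
  qed
qed

lemma D_lenchar: "2 \<le> n \<Longrightarrow> lenchar (coxW TypeD n) gD {0..int n - 1} CD (MD n) 2"
proof
  assume n: "2 \<le> n"
  show "id \<in> coxW TypeD n" by (simp add: WD sp_id negc_id)
  show "\<And>w i. w \<in> coxW TypeD n \<Longrightarrow> i \<in> {0..int n - 1} \<Longrightarrow> w \<circ> gD i \<in> coxW TypeD n"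
    using D_cl[OF n] by blast
  show "MD n id = 0" by (simp add: MD_def invc_id negc_id)
  show "\<And>w i. w \<in> coxW TypeD n \<Longrightarrow> i \<in> {0..int n - 1} \<Longrightarrow> CD i w \<Longrightarrow> MD n (w \<circ> gD i) + 2 = MD n w"
    using D_step[OF n] unfolding WD by fastforce
  show "\<And>w i. w \<in> coxW TypeD n \<Longrightarrow> i \<in> {0..int n - 1} \<Longrightarrow> \<not> CD i w \<Longrightarrow> MD n (w \<circ> gD i) = MD n w + 2"
    using D_step[OF n] unfolding WD by fastforce
  show "\<And>w. w \<in> coxW TypeD n \<Longrightarrow> w \<noteq> id \<Longrightarrow> \<exists>i\<in>{0..int n - 1}. CD i w"
    using D_exdes[OF n] by blast
  show "\<And>i. i \<in> {0..int n - 1} \<Longrightarrow> gD i \<circ> gD i = id"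
  proof -
    fix i :: int assume i: "i \<in> {0..int n - 1}"
    show "gD i \<circ> gD i = id"
    proof (cases "i = 0")
      case True thus ?thesis unfolding gD_def using g0D_inv by (auto simp: fun_eq_iff)
    next
      case False hence "1 \<le> i" using i by auto
      thus ?thesis unfolding gD_def using False gS_comp_invol by simp
    qed
  qed
  show "inj_on gD {0..int n - 1}" by (rule D_ginj)
qed auto

lemma D_far_fix:
  assumes i: "i \<in> {0..int n - 1}" and j: "j \<in> {0..int n - 1}" and f: "far i j"
  shows "(j = 0 \<longrightarrow> gD i 1 = 1 \<and> gD i 2 = 2) \<and> (j \<noteq> 0 \<longrightarrow> gD i j = j \<and> gD i (j+1) = j+1)"
proof (cases "i = 0")
  case True
  hence "3 \<le> j" using f j unfolding far_def by auto
  thus ?thesis using True unfolding gD_def by (simp add: g0D_pos)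
next
  case False
  hence i1: "1 \<le> i" using i by auto
  show ?thesis
  proof (cases "j = 0")
    case True
    hence "3 \<le> i" using f i unfolding far_def by auto
    thus ?thesis using False True unfolding gD_def by (simp add: gS_pos transp_def)
  next
    case jn: False
    hence "2 \<le> \<bar>i - j\<bar>" "1 \<le> j" using f j unfolding far_def by auto
    thus ?thesis using False jn i1 unfolding gD_def by (simp add: gS_pos transp_def) arith
  qed
qed

lemma D_W_finite: "finite (coxW TypeD n)"
  by (rule finite_subset[OF _ sp_W_finite[of n]]) (auto simp: WD)

lemma D_coxfinal: "2 \<le> n \<Longrightarrow> coxfinal (coxW TypeD n) gD {0..int n - 1} CD (MD n) 2 (Aset n)"
proof -
  assume n: "2 \<le> n"
  interpret lenchar "coxW TypeD n" gD "{0..int n - 1}" CD "MD n" 2 by (rule D_lenchar[OF n])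
  have injW: "\<And>w. w \<in> coxW TypeD n \<Longrightarrow> inj w" using genW gen_bij bij_is_inj by blast
  have p16: "6 * card {w \<in> coxW TypeD n. CD j w \<and> CD (j+1) w} = card (coxW TypeD n)"
    if j: "1 \<le> j" "j + 2 \<le> int n" for j
  proof -
    have cla: "\<And>w. w \<in> coxW TypeD n \<Longrightarrow> w \<circ> gS j \<in> coxW TypeD n" using cl[of _ j] j unfolding gD_def by auto
    have clb: "\<And>w. w \<in> coxW TypeD n \<Longrightarrow> w \<circ> gS (j+1) \<in> coxW TypeD n" using cl[of _ "j+1"] j unfolding gD_def by auto
    have "6 * card {w \<in> coxW TypeD n. w (j+1) < w j \<and> w (j+2) < w (j+1)} = card (coxW TypeD n)"
      by (rule six_orders[OF D_W_finite cla clb]) (use j in \<open>auto simp: gS_inv gS_pos transp_def injW\<close>)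
    thus ?thesis using j unfolding CD_def by (simp add: add.assoc)
  qed
  show ?thesis
  proof (unfold_locales)
    show "finite (coxW TypeD n)" by (rule D_W_finite)
    show "\<And>w i j. w \<in> coxW TypeD n \<Longrightarrow> i \<in> {0..int n - 1} \<Longrightarrow> j \<in> {0..int n - 1} \<Longrightarrow> far i j \<Longrightarrow> CD j (w \<circ> gD i) = CD j w"
    proof -
      fix w i j assume w: "w \<in> coxW TypeD n" and i: "i \<in> {0..int n - 1}" and j: "j \<in> {0..int n - 1}" and f: "far i j"
      note h = D_far_fix[OF i j f]
      show "CD j (w \<circ> gD i) = CD j w" using h by (cases "j = 0") (simp_all add: CD_def)
    qed
    show "Aset n \<subseteq> {0..int n - 1}" using Aset_mem by force
    show "\<And>i. i \<in> Aset n \<Longrightarrow> i - 1 \<in> {0..int n - 1} \<and> i + 1 \<in> {0..int n - 1}" using Aset_mem by force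
    show "\<And>i j. i \<in> Aset n \<Longrightarrow> j \<in> {0..int n - 1} \<Longrightarrow> j \<notin> {i - 1, i, i + 1} \<Longrightarrow> far i j" using Aset_far by blast
    show "\<And>i j. i \<in> Aset n \<Longrightarrow> j \<in> Aset n \<Longrightarrow> i \<noteq> j \<Longrightarrow> far i j" by (rule Aset_pair)
    show "\<And>i. i \<in> Aset n \<Longrightarrow> 6 * card {w \<in> coxW TypeD n. CD (i - 1) w \<and> CD i w} = card (coxW TypeD n)"
    proof -
      fix i assume i: "i \<in> Aset n"
      show "6 * card {w \<in> coxW TypeD n. CD (i - 1) w \<and> CD i w} = card (coxW TypeD n)"
        using p16[of "i - 1"] Aset_mem[OF i] by simp
    qed
    show "\<And>i. i \<in> Aset n \<Longrightarrow> 6 * card {w \<in> coxW TypeD n. CD i w \<and> CD (i + 1) w} = card (coxW TypeD n)"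
    proof -
      fix i assume i: "i \<in> Aset n"
      show "6 * card {w \<in> coxW TypeD n. CD i w \<and> CD (i + 1) w} = card (coxW TypeD n)"
        using p16[of i] Aset_mem[OF i] by simp
    qed
  qed
qed

lemma typeD_bounds: "n \<ge> 16 \<Longrightarrow> real n ^ 2 / 20736 \<le> T_moment4 TypeD n \<and> T_moment4 TypeD n \<le> 243 * real n ^ 2"
proof (rule final_from_coxfinal[OF D_coxfinal])
  assume n: "n \<ge> 16"
  show "2 \<le> n" using n by simp
  show "coxS TypeD n = gD ` {0..int n - 1}"
  proof
    show "coxS TypeD n \<subseteq> gD ` {0..int n - 1}"
    proof
      fix s assume "s \<in> coxS TypeD n"
      then consider "s = transp 1 (-2) \<circ> transp (-1) 2" | i where "s = transp i (i + 1) \<circ> transp (- i) (- (i + 1))" "1 \<le> i" "i \<le> int n - 1"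
        unfolding coxS_def by auto
      thus "s \<in> gD ` {0..int n - 1}"
      proof cases
        case 1 thus ?thesis using n unfolding gD_def g0D_def by (intro image_eqI[of _ _ 0]) auto
      next
        case (2 i) thus ?thesis unfolding gD_def gS_def by (intro image_eqI[of _ _ i]) auto
      qed
    qed
    show "gD ` {0..int n - 1} \<subseteq> coxS TypeD n"
      unfolding coxS_def gD_def g0D_def gS_def by auto
  qed
  show "card {0..int n - 1} = n" by simp
  show "real n / 4 \<le> real (card (Aset n))" using n by (rule Aset_big)
qed

theorem theorem3p1:
  shows "\<forall>F :: cox_family. \<exists>c C :: real. 0 < c \<and> c \<le> C \<and>
    (\<forall>\<^sub>F n in sequentially. c * real n ^ 2 \<le> T_moment4 F n \<and> T_moment4 F n \<le> C * real n ^ 2)"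
proof
  fix F :: cox_family
  have ev: "\<forall>\<^sub>F n in sequentially. (1 / 20736) * real n ^ 2 \<le> T_moment4 F n \<and> T_moment4 F n \<le> 243 * real n ^ 2"
  proof (rule eventually_sequentiallyI[of 16])
    fix n :: nat assume n: "16 \<le> n"
    show "(1 / 20736) * real n ^ 2 \<le> T_moment4 F n \<and> T_moment4 F n \<le> 243 * real n ^ 2"
      using typeA_bounds[OF n] typeB_bounds[OF n] typeD_bounds[OF n] by (cases F) auto
  qed
  show "\<exists>c C :: real. 0 < c \<and> c \<le> C \<and>
    (\<forall>\<^sub>F n in sequentially. c * real n ^ 2 \<le> T_moment4 F n \<and> T_moment4 F n \<le> C * real n ^ 2)"
    by (rule exI[of _ "1 / 20736"], rule exI[of _ 243]) (use ev in simp)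
qed

end
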